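(* Let $f:[0,1]\to[0,1]$ and let $x^\star$ be a maximizer of $f$. Assume there exist constants $L>0$ and $\alpha>0$ such that $f(x^\star)-f(x)\le L|x^\star-x|^\alpha$ for all $x\in[0,1]$. Consider the Greedy algorithm run on the discretization $\{1/K,2/K,\dots,1\}$ with $K=\sqrt{\frac43 T\log T}$, where choosing point $x_t$ at round $t$ yields reward $f(x_t)+\eta_t$ with $\{\eta_t\}$ i.i.d. $1$-subgaussian. Then, if $L\le 3^{1/4}(4/3)^{(2\alpha+1)/4}T^{2\alpha}(\log T)^{(\alpha+1)/2}$, the regret satisfies $$R_T\le 15\max\{L^{1/(2\alpha+1)},L^{-1/(2\alpha+1)}\}\,T^{(3\alpha+2)/(4\alpha+2)}\sqrt{\log T}+1.$$
   Context: The Greedy algorithm on a finite set of arms: at each round it pulls an arm with the highest empirical mean of the rewards observed so far, with the convention $0/0=\infty$ (each arm is pulled once initially). The regret is $R_T=Tf(x^\star)-\mathbb E\big[\sum_{t=1}^T f(x_t)\big]$, where $x_t$ is the point chosen at round $t$. Note $K$ depends only on $T$, not on $L,\alpha$. *)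

theory Defs
  imports "HOL-Probability.Probability"
begin

definition subgaussian :: "'a measure \<Rightarrow> real \<Rightarrow> ('a \<Rightarrow> real) \<Rightarrow> bool" where
  "subgaussian M \<sigma> X \<longleftrightarrow>
     (\<forall>l::real. integrable M (\<lambda>\<omega>. exp (l * X \<omega>)) \<and>
        (\<integral>\<omega>. exp (l * X \<omega>) \<partial>M) \<le> exp (l\<^sup>2 * \<sigma>\<^sup>2 / 2))"

text \<open>Histories are lists of (arm, observed reward); arms are 1..K, arm i is the point i/K.\<close>
definition emp_count :: "(nat \<times> real) list \<Rightarrow> nat \<Rightarrow> nat" where
  "emp_count h i = length (filter (\<lambda>p. fst p = i) h)"

definition emp_mean :: "(nat \<times> real) list \<Rightarrow> nat \<Rightarrow> ereal" where
  "emp_mean h i = (if emp_count h i = 0 then \<infinity>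
     else ereal (sum_list (map snd (filter (\<lambda>p. fst p = i) h)) / real (emp_count h i)))"

definition greedy_set :: "nat \<Rightarrow> (nat \<times> real) list \<Rightarrow> nat set" where
  "greedy_set K h = {i \<in> {1..K}. \<forall>j\<in>{1..K}. emp_mean h j \<le> emp_mean h i}"

text \<open>History of Greedy after t rounds; tb is the tie-breaking rule (round, set of maximizers),
  e is the noise realization, reward at round t is f(a/K) + e t.\<close>
fun greedy_hist :: "(real \<Rightarrow> real) \<Rightarrow> nat \<Rightarrow> (nat \<Rightarrow> nat set \<Rightarrow> nat) \<Rightarrow> (nat \<Rightarrow> real)
    \<Rightarrow> nat \<Rightarrow> (nat \<times> real) list" where
  "greedy_hist f K tb e 0 = []"
| "greedy_hist f K tb e (Suc t) =
     (let h = greedy_hist f K tb e t; a = tb t (greedy_set K h)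
      in h @ [(a, f (real a / real K) + e t)])"

text \<open>Arm pulled by Greedy at round t (rounds are 0,...,T-1).\<close>
definition greedy_arm :: "(real \<Rightarrow> real) \<Rightarrow> nat \<Rightarrow> (nat \<Rightarrow> nat set \<Rightarrow> nat) \<Rightarrow> (nat \<Rightarrow> real)
    \<Rightarrow> nat \<Rightarrow> nat" where
  "greedy_arm f K tb e t = tb t (greedy_set K (greedy_hist f K tb e t))"

definition greedy_regret :: "'a measure \<Rightarrow> (real \<Rightarrow> real) \<Rightarrow> real \<Rightarrow> nat
    \<Rightarrow> (nat \<Rightarrow> nat set \<Rightarrow> nat) \<Rightarrow> (nat \<Rightarrow> 'a \<Rightarrow> real) \<Rightarrow> nat \<Rightarrow> real" where
  "greedy_regret M f xs K tb \<eta> T =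
     real T * f xs -
     (\<integral>\<omega>. (\<Sum>t<T. f (real (greedy_arm f K tb (\<lambda>s. \<eta> s \<omega>) t) / real K)) \<partial>M)"

definition disc_K :: "nat \<Rightarrow> nat" where
  "disc_K T = nat \<lceil>sqrt (4/3 * real T * ln (real T))\<rceil>"

end

theory Submission
  imports Defs
begin

definition arms_hist :: "(real \<Rightarrow> real) \<Rightarrow> nat \<Rightarrow> nat list \<Rightarrow> (nat \<Rightarrow> real) \<Rightarrow> (nat \<times> real) list" where
  "arms_hist f K as e = map (\<lambda>s. (as ! s, f (real (as ! s) / real K) + e s)) [0..<length as]"

lemma greedy_hist_map:
  "greedy_hist f K tb e t = map (\<lambda>s. (greedy_arm f K tb e s, f (real (greedy_arm f K tb e s) / real K) + e s)) [0..<t]"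
proof (induction t)
  case (Suc t)
  show ?case using Suc by (simp add: Let_def greedy_arm_def[of f K tb e t])
qed simp

lemma greedy_hist_eq:
  "greedy_hist f K tb e t = arms_hist f K (map (greedy_arm f K tb e) [0..<t]) e"
  unfolding greedy_hist_map arms_hist_def by (intro map_cong) auto

lemma greedy_hist_local:
  "(\<And>s. s < t \<Longrightarrow> e s = e' s) \<Longrightarrow> greedy_hist f K tb e t = greedy_hist f K tb e' t"
  by (induction t) (simp_all add: Let_def)

lemma greedy_arm_local:
  "(\<And>s. s < t \<Longrightarrow> e s = e' s) \<Longrightarrow> greedy_arm f K tb e t = greedy_arm f K tb e' t"
  unfolding greedy_arm_def using greedy_hist_local by metis

lemma emp_count_snoc: "emp_count (h @ [x]) i = emp_count h i + (if fst x = i then 1 else 0)"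
  by (simp add: emp_count_def)

definition emp_sum :: "(nat \<times> real) list \<Rightarrow> nat \<Rightarrow> real" where
  "emp_sum h i = sum_list (map snd (filter (\<lambda>p. fst p = i) h))"

lemma emp_sum_snoc: "emp_sum (h @ [x]) i = emp_sum h i + (if fst x = i then snd x else 0)"
  by (simp add: emp_sum_def)

lemma emp_mean_alt: "emp_mean h i = (if emp_count h i = 0 then \<infinity> else ereal (emp_sum h i / real (emp_count h i)))"
  by (simp add: emp_mean_def emp_sum_def)

lemma greedy_count:
  "emp_count (greedy_hist f K tb e t) i = (\<Sum>s<t. if greedy_arm f K tb e s = i then 1 else 0)"
  by (induction t) (simp_all add: Let_def emp_count_snoc greedy_arm_def emp_count_def[of "[]"])

lemma greedy_sum:
  "emp_sum (greedy_hist f K tb e t) i = (\<Sum>s<t. if greedy_arm f K tb e s = i then f (real i / real K) + e s else 0)"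
  by (induction t) (simp_all add: Let_def emp_sum_snoc greedy_arm_def emp_sum_def[of "[]"])


lemma greedy_set_sub: "greedy_set K h \<subseteq> {1..K}"
  by (auto simp: greedy_set_def)
lemma greedy_set_ne: assumes "K \<ge> 1" shows "greedy_set K h \<noteq> {}"
proof -
  have fin: "finite (emp_mean h ` {1..K})" by simp
  have ne: "emp_mean h ` {1..K} \<noteq> {}" using assms by auto
  have "Max (emp_mean h ` {1..K}) \<in> emp_mean h ` {1..K}" using Max_in[OF fin ne] .
  then obtain i where i: "i \<in> {1..K}" "Max (emp_mean h ` {1..K}) = emp_mean h i"
    by (rule imageE)
  have "\<forall>j\<in>{1..K}. emp_mean h j \<le> emp_mean h i"
  proof
    fix j assume "j \<in> {1..K}"
    then have "emp_mean h j \<le> Max (emp_mean h ` {1..K})" using fin by (intro Max_ge) auto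
    then show "emp_mean h j \<le> emp_mean h i" unfolding i(2) .
  qed
  with i(1) have "i \<in> greedy_set K h" unfolding greedy_set_def by simp
  then show ?thesis by auto
qed

lemma greedy_arm_in:
  assumes "K \<ge> 1" "\<And>t S. S \<noteq> {} \<Longrightarrow> S \<subseteq> {1..K} \<Longrightarrow> tb t S \<in> S"
  shows "greedy_arm f K tb e t \<in> greedy_set K (greedy_hist f K tb e t)"
  unfolding greedy_arm_def by (rule assms(2)[OF greedy_set_ne[OF assms(1)] greedy_set_sub])

abbreviation "EE \<equiv> (PiM UNIV (\<lambda>_::nat. (borel :: real measure)))"

lemma arms_hist_snoc:
  "arms_hist f K (as @ [x]) e = arms_hist f K as e @ [(x, f (real x / real K) + e (length as))]"
  unfolding arms_hist_def by (auto simp: nth_append intro!: map_cong)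

lemma arms_count:
  "emp_count (arms_hist f K as e) j = (\<Sum>s<length as. if as ! s = j then 1 else 0)"
proof (induction as rule: rev_induct)
  case Nil then show ?case by (simp add: arms_hist_def emp_count_def)
next
  case (snoc x as)
  show ?case unfolding arms_hist_snoc emp_count_snoc snoc
    by (simp add: nth_append)
qed

lemma arms_sum:
  "emp_sum (arms_hist f K as e) j = (\<Sum>s<length as. if as ! s = j then f (real j / real K) + e s else 0)"
proof (induction as rule: rev_induct)
  case Nil then show ?case by (simp add: arms_hist_def emp_sum_def)
next
  case (snoc x as)
  show ?case unfolding arms_hist_snoc emp_sum_snoc snoc
    by (simp add: nth_append)
qed

lemma meas_emp_mean:
  "(\<lambda>e. emp_mean (arms_hist f K as e) j) \<in> borel_measurable EE"
proof -
  have eq: "(\<lambda>e. emp_mean (arms_hist f K as e) j) = (\<lambda>e.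
     (if (\<Sum>s<length as. if as ! s = j then 1 else 0::nat) = 0 then \<infinity>
      else ereal ((\<Sum>s<length as. if as ! s = j then f (real j / real K) + e s else 0) /
                  real (\<Sum>s<length as. if as ! s = j then 1 else 0::nat))))"
    by (rule ext) (simp only: emp_mean_alt arms_count arms_sum)
  show ?thesis unfolding eq by measurable
qed

lemma greedy_set_eq_iff:
  assumes "S \<subseteq> {1..K}"
  shows "greedy_set K h = S \<longleftrightarrow> (\<forall>i\<in>{1..K}. (i \<in> S \<longleftrightarrow> (\<forall>j\<in>{1..K}. emp_mean h j \<le> emp_mean h i)))"
  using assms unfolding greedy_set_def by auto

lemma pred_gen:
  fixes g :: "nat \<Rightarrow> 'b \<Rightarrow> ereal"
  assumes [measurable]: "\<And>j. g j \<in> borel_measurable N"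
  shows "{e \<in> space N. (\<forall>i\<in>{1..K}. (i \<in> S \<longleftrightarrow> (\<forall>j\<in>{1..K}. g j e \<le> g i e)))} \<in> sets N"
  by measurable

lemma meas_F:
  fixes tb :: "nat \<Rightarrow> nat set \<Rightarrow> nat"
  shows
  "(\<lambda>e. tb t (greedy_set K (arms_hist f K as e))) \<in> measurable EE (count_space UNIV)"
proof -
  have "{e \<in> space EE. tb t (greedy_set K (arms_hist f K as e)) = i} \<in> sets EE" for i
  proof -
    have eq: "{e \<in> space EE. tb t (greedy_set K (arms_hist f K as e)) = i} =
      (\<Union>S\<in>{S. S \<subseteq> {1..K} \<and> tb t S = i}. {e \<in> space EE. greedy_set K (arms_hist f K as e) = S})"
      using greedy_set_sub by blast
    have "{e \<in> space EE. greedy_set K (arms_hist f K as e) = S} \<in> sets EE" if "S \<subseteq> {1..K}" for S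
    proof -
      have "{e \<in> space EE. greedy_set K (arms_hist f K as e) = S} =
         {e \<in> space EE. (\<forall>i\<in>{1..K}. (i \<in> S \<longleftrightarrow> (\<forall>j\<in>{1..K}. emp_mean (arms_hist f K as e) j \<le> emp_mean (arms_hist f K as e) i)))}"
        using greedy_set_eq_iff[OF that] by simp
      also have "\<dots> \<in> sets EE"
        by (rule pred_gen[where g="\<lambda>j e. emp_mean (arms_hist f K as e) j"]) (rule meas_emp_mean)
      finally show ?thesis .
    qed
    then show ?thesis unfolding eq by (intro sets.finite_UN) auto
  qed
  moreover have "(\<lambda>e. tb t (greedy_set K (arms_hist f K as e))) -` {i} \<inter> space EE =
     {e \<in> space EE. tb t (greedy_set K (arms_hist f K as e)) = i}" for i by auto
  ultimately have "\<forall>i\<in>UNIV. (\<lambda>e. tb t (greedy_set K (arms_hist f K as e))) -` {i} \<inter> space EE \<in> sets EE"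
    by simp
  then show ?thesis
    by (intro measurable_count_space_eq2_countable[THEN iffD2] conjI) auto
qed

lemma meas_arms_list:
  "(\<lambda>e. map (\<lambda>s. greedy_arm f K tb e s) [0..<t]) \<in> measurable EE (count_space UNIV)"
  and meas_arm:
  "(\<lambda>e. greedy_arm f K tb e t) \<in> measurable EE (count_space UNIV)"
proof -
  have *: "(\<lambda>e. map (\<lambda>s. greedy_arm f K tb e s) [0..<t]) \<in> measurable EE (count_space UNIV) \<and>
        (\<lambda>e. greedy_arm f K tb e t) \<in> measurable EE (count_space UNIV)"
  proof (induction t)
    case 0
    have a: "(\<lambda>e. greedy_arm f K tb e 0) = (\<lambda>e. tb 0 (greedy_set K []))"
      by (simp add: greedy_arm_def)
    show ?case unfolding a by simp
  next
    case (Suc t)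
    have AL: "(\<lambda>e. map (\<lambda>s. greedy_arm f K tb e s) [0..<Suc t]) \<in> measurable EE (count_space UNIV)"
    proof -
      have m: "(\<lambda>e. (\<lambda>as. as @ [greedy_arm f K tb e t]) (map (\<lambda>s. greedy_arm f K tb e s) [0..<t]) ) \<in> measurable EE (count_space UNIV)"
      proof (rule measurable_compose_countable[where f="\<lambda>as e. as @ [greedy_arm f K tb e t]"])
        fix as :: "nat list"
        show "(\<lambda>e. as @ [greedy_arm f K tb e t]) \<in> measurable EE (count_space UNIV)"
          using Suc.IH by (intro measurable_compose[OF _ measurable_count_space]) auto
      qed (use Suc.IH in auto)
      then show ?thesis by simp
    qed
    have eq: "(\<lambda>e. greedy_arm f K tb e (Suc t)) =
      (\<lambda>e. (\<lambda>as e. tb (Suc t) (greedy_set K (arms_hist f K as e))) (map (\<lambda>s. greedy_arm f K tb e s) [0..<Suc t]) e)"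
      unfolding greedy_arm_def[of _ _ _ _ "Suc t"] greedy_hist_eq[of _ _ _ _ "Suc t"] by simp
    have "(\<lambda>e. greedy_arm f K tb e (Suc t)) \<in> measurable EE (count_space UNIV)"
      unfolding eq by (rule measurable_compose_countable[OF meas_F AL])
    with AL show ?case by simp
  qed
  from * show "(\<lambda>e. map (\<lambda>s. greedy_arm f K tb e s) [0..<t]) \<in> measurable EE (count_space UNIV)" by simp
  from * show "(\<lambda>e. greedy_arm f K tb e t) \<in> measurable EE (count_space UNIV)" by simp
qed

lemma meas_ext:
  "(\<lambda>x s. if s < t then x s else 0) \<in> measurable (PiM {..<t} (\<lambda>_. borel)) EE"
proof (rule measurable_PiM_single')
  fix s :: nat
  show "(\<lambda>x. if s < t then x s else 0) \<in> borel_measurable (PiM {..<t} (\<lambda>_. borel))"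
    by (cases "s < t") (simp_all add: measurable_component_singleton)
qed auto

lemma (in prob_space) indep_factor:
  fixes \<eta> :: "nat \<Rightarrow> 'a \<Rightarrow> real" and g :: "(nat \<Rightarrow> real) \<Rightarrow> ennreal" and h :: "real \<Rightarrow> ennreal"
  assumes meas: "\<And>t. \<eta> t \<in> borel_measurable M"
    and ind: "indep_vars (\<lambda>_. borel) \<eta> UNIV"
    and g: "g \<in> borel_measurable EE"
    and gl: "\<And>e e'. (\<And>s. s < t \<Longrightarrow> e s = e' s) \<Longrightarrow> g e = g e'"
    and h: "h \<in> borel_measurable borel"
  shows "(\<integral>\<^sup>+\<omega>. g (\<lambda>s. \<eta> s \<omega>) * h (\<eta> t \<omega>) \<partial>M) =
         (\<integral>\<^sup>+\<omega>. g (\<lambda>s. \<eta> s \<omega>) \<partial>M) * (\<integral>\<^sup>+\<omega>. h (\<eta> t \<omega>) \<partial>M)"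
proof -
  define X1 where "X1 \<omega> = restrict (\<lambda>s. \<eta> s \<omega>) {..<t}" for \<omega>
  define X2 where "X2 \<omega> = restrict (\<lambda>s. \<eta> s \<omega>) {t}" for \<omega>
  define g' where "g' x = g (\<lambda>s. if s < t then x s else 0)" for x :: "nat \<Rightarrow> real"
  define h' where "h' x = h (x t)" for x :: "nat \<Rightarrow> real"
  have i1: "indep_var (PiM {..<t} (\<lambda>_. borel)) X1 (PiM {t} (\<lambda>_. borel)) X2"
    unfolding X1_def X2_def by (rule indep_var_restrict[OF ind]) auto
  have mg': "g' \<in> borel_measurable (PiM {..<t} (\<lambda>_. borel))"
    unfolding g'_def by (rule measurable_compose[OF meas_ext g])
  have mh': "h' \<in> borel_measurable (PiM {t} (\<lambda>_. borel))"
    unfolding h'_def by (rule measurable_compose[OF _ h]) (rule measurable_component_singleton, simp)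
  have i2: "indep_var borel (g' \<circ> X1) borel (h' \<circ> X2)"
    by (rule indep_var_compose[OF i1 mg' mh'])
  have eg: "g (\<lambda>s. \<eta> s \<omega>) = (g' \<circ> X1) \<omega>" for \<omega>
    unfolding g'_def X1_def comp_def by (rule gl) auto
  have eh: "h (\<eta> t \<omega>) = (h' \<circ> X2) \<omega>" for \<omega>
    unfolding h'_def X2_def by simp
  have **: "(\<lambda> _. borel) = case_bool borel borel"
    by (rule ext, metis (full_types) bool.simps(3) bool.simps(4))
  have ib: "indep_vars (\<lambda>_. borel) (case_bool (g' \<circ> X1) (h' \<circ> X2)) UNIV"
    using i2 unfolding indep_var_def ** .
  have "(\<integral>\<^sup>+\<omega>. (\<Prod>b\<in>UNIV. case_bool (g' \<circ> X1) (h' \<circ> X2) b \<omega>) \<partial>M) =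
        (\<Prod>b\<in>UNIV. \<integral>\<^sup>+\<omega>. case_bool (g' \<circ> X1) (h' \<circ> X2) b \<omega> \<partial>M)"
    by (rule indep_vars_nn_integral[OF _ ib]) auto
  then show ?thesis unfolding eg eh by (simp add: UNIV_bool mult.commute comp_def)
qed

definition Zf :: "(nat \<Rightarrow> (nat \<Rightarrow> real) \<Rightarrow> bool) \<Rightarrow> real \<Rightarrow> nat \<Rightarrow> (nat \<Rightarrow> real) \<Rightarrow> real" where
  "Zf sel l t e = exp (l * (\<Sum>s<t. if sel s e then e s else 0) - l\<^sup>2/2 * (\<Sum>s<t. if sel s e then 1 else 0))"

fun Wf :: "(nat \<Rightarrow> (nat \<Rightarrow> real) \<Rightarrow> bool) \<Rightarrow> real \<Rightarrow> real \<Rightarrow> nat \<Rightarrow> (nat \<Rightarrow> real) \<Rightarrow> real" where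
  "Wf sel l c 0 e = Zf sel l 0 e"
| "Wf sel l c (Suc t) e = (if \<exists>s\<le>t. c \<le> Zf sel l s e then Wf sel l c t e else Zf sel l (Suc t) e)"

lemma Zf_0: "Zf sel l 0 e = 1" by (simp add: Zf_def)

lemma Zf_pos: "Zf sel l t e > 0" by (simp add: Zf_def)

lemma Zf_Suc: "Zf sel l (Suc t) e = Zf sel l t e * (if sel t e then exp (l * e t - l\<^sup>2/2) else 1)"
  unfolding Zf_def by (simp add: exp_add[symmetric] algebra_simps)

lemma Wf_pos: "Wf sel l c t e > 0"
  by (induction t) (simp_all add: Zf_pos)

lemma Wf_eq_Z: "(\<And>s. s < t \<Longrightarrow> Zf sel l s e < c) \<Longrightarrow> Wf sel l c t e = Zf sel l t e"
proof (cases t)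
  case (Suc t')
  assume a: "\<And>s. s < t \<Longrightarrow> Zf sel l s e < c"
  have "\<not> (\<exists>s\<le>t'. c \<le> Zf sel l s e)"
  proof
    assume "\<exists>s\<le>t'. c \<le> Zf sel l s e"
    then obtain s where "s \<le> t'" "c \<le> Zf sel l s e" by blast
    moreover have "s < t" using \<open>s \<le> t'\<close> Suc by simp
    ultimately show False using a by fastforce
  qed
  then show ?thesis by (subst Suc, subst Wf.simps(2), subst if_not_P) (simp_all add: Suc)
qed simp

lemma Wf_ge: "(\<exists>s\<le>t. c \<le> Zf sel l s e) \<Longrightarrow> c \<le> Wf sel l c t e"
proof (induction t)
  case 0 then show ?case by simp
next
  case (Suc t)
  show ?case
  proof (cases "\<exists>s\<le>t. c \<le> Zf sel l s e")
    case True then show ?thesis using Suc.IH unfolding Wf.simps if_P[OF True] by blast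
  next
    case False
    then have "c \<le> Zf sel l (Suc t) e" using Suc.prems by (metis le_Suc_eq)
    then show ?thesis unfolding Wf.simps if_not_P[OF False] .
  qed
qed

lemma Wf_Suc': "Wf sel l c (Suc t) e = Wf sel l c t e *
   (if (\<exists>s\<le>t. c \<le> Zf sel l s e) \<or> \<not> sel t e then 1 else exp (l * e t - l\<^sup>2/2))"
proof (cases "\<exists>s\<le>t. c \<le> Zf sel l s e")
  case False
  then have "Wf sel l c t e = Zf sel l t e" by (intro Wf_eq_Z) (meson less_imp_le_nat not_le)
  have F: "(\<exists>s\<le>t. c \<le> Zf sel l s e) = False" using False by blast
  show ?thesis unfolding Wf.simps F if_False Zf_Suc \<open>Wf sel l c t e = Zf sel l t e\<close> by simp
qed simp

lemma Zf_local:
  assumes sl: "\<And>t e e'. (\<And>s. s < t \<Longrightarrow> e s = e' s) \<Longrightarrow> sel t e = sel t e'"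
    and "\<And>s. s < t \<Longrightarrow> e s = e' s"
  shows "Zf sel l t e = Zf sel l t e'"
proof -
  have "sel s e = sel s e'" if "s < t" for s using sl[where t=s and e=e and e'=e'] assms(2) that by auto
  then show ?thesis unfolding Zf_def using assms(2) by (intro arg_cong[where f=exp] arg_cong2[where f="(-)"] arg_cong2[where f="(*)"] refl sum.cong) auto
qed

lemma Wf_local:
  assumes sl: "\<And>t e e'. (\<And>s. s < t \<Longrightarrow> e s = e' s) \<Longrightarrow> sel t e = sel t e'"
  shows "(\<And>s. s < t \<Longrightarrow> e s = e' s) \<Longrightarrow> Wf sel l c t e = Wf sel l c t e'"
proof (induction t)
  case 0 then show ?case by (simp add: Zf_0)
next
  case (Suc t)
  have z: "Zf sel l s e = Zf sel l s e'" if "s \<le> Suc t" for s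
    using Zf_local[OF sl, where t=s and e=e and e'=e'] Suc.prems that by auto
  have w: "Wf sel l c t e = Wf sel l c t e'" using Suc by auto
  have cc: "(\<exists>s\<le>t. c \<le> Zf sel l s e) \<longleftrightarrow> (\<exists>s\<le>t. c \<le> Zf sel l s e')" 
  proof
    assume "\<exists>s\<le>t. c \<le> Zf sel l s e"
    then obtain s where "s \<le> t" "c \<le> Zf sel l s e" by blast
    then show "\<exists>s\<le>t. c \<le> Zf sel l s e'" using z[of s] by auto
  next
    assume "\<exists>s\<le>t. c \<le> Zf sel l s e'"
    then obtain s where "s \<le> t" "c \<le> Zf sel l s e'" by blast
    then show "\<exists>s\<le>t. c \<le> Zf sel l s e" using z[of s] by auto
  qed
  show ?case unfolding Wf.simps cc w z[of "Suc t", OF le_refl] ..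
qed

lemma Zf_meas:
  assumes [measurable]: "\<And>t. Measurable.pred EE (sel t)"
  shows "Zf sel l t \<in> borel_measurable EE"
  unfolding Zf_def by measurable

lemma Wf_meas:
  assumes [measurable]: "\<And>t. Measurable.pred EE (sel t)"
  shows "Wf sel l c t \<in> borel_measurable EE"
proof (induction t)
  case 0 then show ?case using Zf_meas[OF assms] by simp
next
  case (Suc t)
  note [measurable] = Suc Zf_meas[OF assms]
  have "Wf sel l c (Suc t) = (\<lambda>e. if \<exists>s\<in>{..t}. c \<le> Zf sel l s e then Wf sel l c t e else Zf sel l (Suc t) e)"
    by (auto simp: fun_eq_iff)
  also have "\<dots> \<in> borel_measurable EE" by measurable
  finally show ?case .
qed

lemma (in prob_space) ville:
  fixes \<eta> :: "nat \<Rightarrow> 'a \<Rightarrow> real"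
  assumes meas: "\<And>t. \<eta> t \<in> borel_measurable M"
    and ind: "indep_vars (\<lambda>_. borel) \<eta> UNIV"
    and int: "\<And>t. integrable M (\<lambda>\<omega>. exp (l * \<eta> t \<omega>))"
    and mgf: "\<And>t. (\<integral>\<omega>. exp (l * \<eta> t \<omega>) \<partial>M) \<le> exp (l\<^sup>2/2)"
    and selm: "\<And>t. Measurable.pred EE (sel t)"
    and sl: "\<And>t e e'. (\<And>s. s < t \<Longrightarrow> e s = e' s) \<Longrightarrow> sel t e = sel t e'"
    and c: "c > 0"
  shows "emeasure M {\<omega>\<in>space M. \<exists>t\<le>T. c \<le> Zf sel l t (\<lambda>s. \<eta> s \<omega>)} \<le> ennreal (1/c)"
proof -
  have X[measurable]: "(\<lambda>\<omega> s. \<eta> s \<omega>) \<in> measurable M EE"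
    by (rule measurable_PiM_single') (auto simp: meas)
  note [measurable] = selm Wf_meas[OF selm] Zf_meas[OF selm] meas
  have step: "(\<integral>\<^sup>+\<omega>. ennreal (Wf sel l c (Suc t) (\<lambda>s. \<eta> s \<omega>)) \<partial>M) \<le>
              (\<integral>\<^sup>+\<omega>. ennreal (Wf sel l c t (\<lambda>s. \<eta> s \<omega>)) \<partial>M)" for t
  proof -
    define D where "D e = ((\<exists>s\<le>t. c \<le> Zf sel l s e) \<or> \<not> sel t e)" for e
    define G0 where "G0 e = ennreal (if D e then Wf sel l c t e else 0)" for e
    define G where "G e = ennreal (if D e then 0 else Wf sel l c t e)" for e
    define k where "k = ennreal (exp (- (l\<^sup>2/2)))"
    have Dm[measurable]: "Measurable.pred EE D"
      unfolding D_def by measurable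
    have G0m[measurable]: "G0 \<in> borel_measurable EE" unfolding G0_def by measurable
    have Gm[measurable]: "G \<in> borel_measurable EE" unfolding G_def by measurable
    have pw: "ennreal (Wf sel l c (Suc t) e) = G0 e + G e * ennreal (exp (l * e t)) * k" for e
    proof (cases "D e")
      case True
      then show ?thesis unfolding Wf_Suc' G0_def G_def D_def[symmetric] by simp
    next
      case False
      have r: "Wf sel l c (Suc t) e = Wf sel l c t e * exp (l * e t) * exp (- (l\<^sup>2/2))"
      proof -
        have x: "exp (l * e t - l\<^sup>2/2) = exp (l * e t) * exp (- (l\<^sup>2/2))"
          by (simp add: exp_add[symmetric])
        have "Wf sel l c (Suc t) e = Wf sel l c t e * exp (l * e t - l\<^sup>2/2)"
          using False unfolding Wf_Suc' D_def[symmetric] by simp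
        then show ?thesis unfolding x by (simp only: mult.assoc)
      qed
      have p: "0 \<le> Wf sel l c t e" using Wf_pos[of sel l c t e] by simp
      have "ennreal (Wf sel l c (Suc t) e) = ennreal (Wf sel l c t e) * ennreal (exp (l * e t)) * k"
        unfolding k_def r using p by (simp add: ennreal_mult)
      then show ?thesis unfolding G0_def G_def using False by simp
    qed
    have pw2: "ennreal (Wf sel l c t e) = G0 e + G e" for e
      unfolding G0_def G_def by simp
    have Dl: "D e = D e'" if "\<And>s. s < t \<Longrightarrow> e s = e' s" for e e'
    proof -
      have "Zf sel l s e = Zf sel l s e'" if "s \<le> t" for s
        using Zf_local[OF sl, where t=s and e=e and e'=e'] \<open>\<And>s. s < t \<Longrightarrow> e s = e' s\<close> that by auto
      moreover have "sel t e = sel t e'" using sl that by blast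
      ultimately show ?thesis unfolding D_def by (metis (no_types, lifting))
    qed
    have Gl: "G e = G e'" if "\<And>s. s < t \<Longrightarrow> e s = e' s" for e e'
      unfolding G_def using Dl[OF that] Wf_local[OF sl, where t=t and e=e and e'=e'] that by simp
    have "(\<integral>\<^sup>+\<omega>. ennreal (Wf sel l c (Suc t) (\<lambda>s. \<eta> s \<omega>)) \<partial>M) =
          (\<integral>\<^sup>+\<omega>. G0 (\<lambda>s. \<eta> s \<omega>) + G (\<lambda>s. \<eta> s \<omega>) * ennreal (exp (l * \<eta> t \<omega>)) * k \<partial>M)"
      unfolding pw ..
    also have "\<dots> = (\<integral>\<^sup>+\<omega>. G0 (\<lambda>s. \<eta> s \<omega>) \<partial>M) + (\<integral>\<^sup>+\<omega>. G (\<lambda>s. \<eta> s \<omega>) * ennreal (exp (l * \<eta> t \<omega>)) * k \<partial>M)"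
      by (rule nn_integral_add) measurable
    also have "(\<integral>\<^sup>+\<omega>. G (\<lambda>s. \<eta> s \<omega>) * ennreal (exp (l * \<eta> t \<omega>)) * k \<partial>M) =
        (\<integral>\<^sup>+\<omega>. G (\<lambda>s. \<eta> s \<omega>) * ennreal (exp (l * \<eta> t \<omega>)) \<partial>M) * k"
      by (rule nn_integral_multc) measurable
    also have "(\<integral>\<^sup>+\<omega>. G (\<lambda>s. \<eta> s \<omega>) * ennreal (exp (l * \<eta> t \<omega>)) \<partial>M) =
        (\<integral>\<^sup>+\<omega>. G (\<lambda>s. \<eta> s \<omega>) \<partial>M) * (\<integral>\<^sup>+\<omega>. ennreal (exp (l * \<eta> t \<omega>)) \<partial>M)"
      by (rule indep_factor[OF meas ind Gm Gl, where h="\<lambda>x. ennreal (exp (l * x))"]) (auto, measurable)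
    also have "(\<integral>\<^sup>+\<omega>. ennreal (exp (l * \<eta> t \<omega>)) \<partial>M) = ennreal (\<integral>\<omega>. exp (l * \<eta> t \<omega>) \<partial>M)"
      by (rule nn_integral_eq_integral[OF int]) auto
    also have "(\<integral>\<^sup>+\<omega>. G (\<lambda>s. \<eta> s \<omega>) \<partial>M) * ennreal (\<integral>\<omega>. exp (l * \<eta> t \<omega>) \<partial>M) * k \<le>
               (\<integral>\<^sup>+\<omega>. G (\<lambda>s. \<eta> s \<omega>) \<partial>M)"
    proof -
      have "ennreal (\<integral>\<omega>. exp (l * \<eta> t \<omega>) \<partial>M) * k \<le> ennreal (exp (l\<^sup>2/2)) * ennreal (exp (- (l\<^sup>2/2)))"
        unfolding k_def by (intro mult_right_mono ennreal_leI mgf) auto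
      also have "\<dots> = 1" by (simp add: ennreal_mult[symmetric] exp_minus)
      finally have "ennreal (\<integral>\<omega>. exp (l * \<eta> t \<omega>) \<partial>M) * k \<le> 1" .
      then have "(\<integral>\<^sup>+\<omega>. G (\<lambda>s. \<eta> s \<omega>) \<partial>M) * (ennreal (\<integral>\<omega>. exp (l * \<eta> t \<omega>) \<partial>M) * k) \<le>
                 (\<integral>\<^sup>+\<omega>. G (\<lambda>s. \<eta> s \<omega>) \<partial>M) * 1"
        by (intro mult_left_mono) auto
      then show ?thesis by (simp add: mult.assoc)
    qed
    then have "(\<integral>\<^sup>+\<omega>. G0 (\<lambda>s. \<eta> s \<omega>) \<partial>M) + (\<integral>\<^sup>+\<omega>. G (\<lambda>s. \<eta> s \<omega>) \<partial>M) * ennreal (\<integral>\<omega>. exp (l * \<eta> t \<omega>) \<partial>M) * k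
       \<le> (\<integral>\<^sup>+\<omega>. G0 (\<lambda>s. \<eta> s \<omega>) \<partial>M) + (\<integral>\<^sup>+\<omega>. G (\<lambda>s. \<eta> s \<omega>) \<partial>M)"
      by (rule add_left_mono)
    also have "\<dots> = (\<integral>\<^sup>+\<omega>. G0 (\<lambda>s. \<eta> s \<omega>) + G (\<lambda>s. \<eta> s \<omega>) \<partial>M)"
      by (rule nn_integral_add[symmetric]) measurable
    also have "\<dots> = (\<integral>\<^sup>+\<omega>. ennreal (Wf sel l c t (\<lambda>s. \<eta> s \<omega>)) \<partial>M)"
      unfolding pw2 ..
    finally show ?thesis .
  qed
  have bound: "(\<integral>\<^sup>+\<omega>. ennreal (Wf sel l c t (\<lambda>s. \<eta> s \<omega>)) \<partial>M) \<le> 1" for t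
  proof (induction t)
    case 0
    show ?case by (simp add: Zf_0 emeasure_space_1)
  next
    case (Suc t) then show ?case using step[of t] by order
  qed
  have sub: "{\<omega>\<in>space M. \<exists>t\<le>T. c \<le> Zf sel l t (\<lambda>s. \<eta> s \<omega>)} \<subseteq>
         {\<omega>\<in>space M. 1 \<le> ennreal (1/c) * ennreal (Wf sel l c T (\<lambda>s. \<eta> s \<omega>))}"
  proof safe
    fix \<omega> t assume "\<omega> \<in> space M" "t \<le> T" "c \<le> Zf sel l t (\<lambda>s. \<eta> s \<omega>)"
    then have "c \<le> Wf sel l c T (\<lambda>s. \<eta> s \<omega>)" by (intro Wf_ge) auto
    then have "1 \<le> (1/c) * Wf sel l c T (\<lambda>s. \<eta> s \<omega>)" using c by (simp add: field_simps)
    then show "1 \<le> ennreal (1/c) * ennreal (Wf sel l c T (\<lambda>s. \<eta> s \<omega>))"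
      using c by (simp add: ennreal_mult[symmetric] ennreal_1[symmetric] del: ennreal_1)
  qed
  have "emeasure M {\<omega>\<in>space M. \<exists>t\<le>T. c \<le> Zf sel l t (\<lambda>s. \<eta> s \<omega>)} \<le>
        emeasure M {\<omega>\<in>space M. 1 \<le> ennreal (1/c) * ennreal (Wf sel l c T (\<lambda>s. \<eta> s \<omega>))}"
    by (rule emeasure_mono[OF sub]) measurable
  also have "\<dots> \<le> ennreal (1/c) * (\<integral>\<^sup>+\<omega>. ennreal (Wf sel l c T (\<lambda>s. \<eta> s \<omega>)) * indicator (space M) \<omega> \<partial>M)"
    by (rule nn_integral_Markov_inequality) measurable
  also have "(\<integral>\<^sup>+\<omega>. ennreal (Wf sel l c T (\<lambda>s. \<eta> s \<omega>)) * indicator (space M) \<omega> \<partial>M) =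
             (\<integral>\<^sup>+\<omega>. ennreal (Wf sel l c T (\<lambda>s. \<eta> s \<omega>)) \<partial>M)"
    by (rule nn_integral_cong) auto
  also have "ennreal (1/c) * \<dots> \<le> ennreal (1/c) * 1"
    by (intro mult_left_mono bound) auto
  finally show ?thesis by simp
qed

definition cnt where "cnt f K tb e t i = (\<Sum>s<t. if greedy_arm f K tb e s = i then 1 else 0::nat)"
definition nsum where "nsum f K tb e t i = (\<Sum>s<t. if greedy_arm f K tb e s = i then e s else 0::real)"

lemma cnt_Suc: "cnt f K tb e (Suc s) i = cnt f K tb e s i + (if greedy_arm f K tb e s = i then 1 else 0)"
  by (simp add: cnt_def)

lemma cnt_mono: "s \<le> t \<Longrightarrow> cnt f K tb e s i \<le> cnt f K tb e t i"
  unfolding cnt_def by (rule sum_mono2) auto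

lemma cnt_strict: "s < t \<Longrightarrow> greedy_arm f K tb e s = i \<Longrightarrow> cnt f K tb e s i < cnt f K tb e t i"
  using cnt_Suc[of f K tb e s i] cnt_mono[of "Suc s" t f K tb e i] by simp

lemma cnt_le: "cnt f K tb e t i \<le> t"
proof -
  have "cnt f K tb e t i \<le> (\<Sum>s<t. 1)" unfolding cnt_def by (rule sum_mono) auto
  then show ?thesis by simp
qed

lemma cnt_pos: "s < t \<Longrightarrow> greedy_arm f K tb e s = i \<Longrightarrow> 1 \<le> cnt f K tb e t i"
  using cnt_strict[of s t f K tb e i] by simp

lemma cnt_real: "real (cnt f K tb e t i) = (\<Sum>s<t. if greedy_arm f K tb e s = i then 1 else 0::real)"
  by (induction t) (simp_all add: cnt_Suc, simp add: cnt_def)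

lemma emp_mean_greedy:
  "emp_mean (greedy_hist f K tb e t) i = (if cnt f K tb e t i = 0 then \<infinity>
     else ereal (f (real i / real K) + nsum f K tb e t i / real (cnt f K tb e t i)))"
proof -
  have c: "emp_count (greedy_hist f K tb e t) i = cnt f K tb e t i"
    unfolding greedy_count cnt_def ..
  have s: "emp_sum (greedy_hist f K tb e t) i = real (cnt f K tb e t i) * f (real i / real K) + nsum f K tb e t i"
  proof -
    have "(\<Sum>s<t. if greedy_arm f K tb e s = i then f (real i / real K) + e s else 0) =
          (\<Sum>s<t. (if greedy_arm f K tb e s = i then 1 else 0) * f (real i / real K) + (if greedy_arm f K tb e s = i then e s else 0))"
      by (rule sum.cong) auto
    also have "\<dots> = real (cnt f K tb e t i) * f (real i / real K) + nsum f K tb e t i"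
      unfolding sum.distrib cnt_real nsum_def sum_distrib_right ..
    finally show ?thesis unfolding greedy_sum .
  qed
  show ?thesis unfolding emp_mean_alt c s by (simp add: field_simps)
qed

lemma Zf_single:
  "Zf (\<lambda>s e. greedy_arm f K tb e s \<in> {i}) l t e = exp (l * nsum f K tb e t i - l\<^sup>2/2 * real (cnt f K tb e t i))"
  unfolding Zf_def nsum_def cnt_real by simp

lemma Zf_set:
  assumes "finite A"
  shows "Zf (\<lambda>s e. greedy_arm f K tb e s \<in> A) l t e =
    exp (l * (\<Sum>j\<in>A. nsum f K tb e t j) - l\<^sup>2/2 * (\<Sum>j\<in>A. real (cnt f K tb e t j)))"
proof -
  have 1: "(\<Sum>s<t. if greedy_arm f K tb e s \<in> A then e s else 0) = (\<Sum>j\<in>A. nsum f K tb e t j)"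
    unfolding nsum_def using assms by (subst sum.swap) (simp add: sum.delta)
  have 2: "(\<Sum>s<t. if greedy_arm f K tb e s \<in> A then 1 else 0) = (\<Sum>j\<in>A. real (cnt f K tb e t j))"
    unfolding cnt_real using assms by (subst sum.swap) (simp add: sum.delta)
  show ?thesis unfolding Zf_def 1 2 ..
qed

lemma greedy_props:
  assumes K1: "K \<ge> 1" and tbv: "\<And>t S. S \<noteq> {} \<Longrightarrow> S \<subseteq> {1..K} \<Longrightarrow> tb t S \<in> S"
  shows "greedy_arm f K tb e t \<in> {1..K}"
    and "\<And>j. j \<in> {1..K} \<Longrightarrow> emp_mean (greedy_hist f K tb e t) j \<le> emp_mean (greedy_hist f K tb e t) (greedy_arm f K tb e t)"
  using greedy_arm_in[OF K1 tbv, where f=f and e=e and t=t] unfolding greedy_set_def by auto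

lemma key_good:
  fixes m :: nat and \<delta> g0 fs :: real
  assumes K1: "K \<ge> 1" and tbv: "\<And>t S. S \<noteq> {} \<Longrightarrow> S \<subseteq> {1..K} \<Longrightarrow> tb t S \<in> S"
    and A: "A \<subseteq> {1..K}" "m \<le> card A"
    and d: "\<delta> > 0" and g0A: "\<And>j. j \<in> A \<Longrightarrow> fs - f (real j / real K) \<le> g0"
    and c1: "1 \<le> cnt f K tb e t (greedy_arm f K tb e t)"
    and nb: "\<not> exp (\<delta>\<^sup>2 * m / 2) \<le> Zf (\<lambda>s e. greedy_arm f K tb e s \<in> A) (- \<delta>) t e"
  shows "fs - (g0 + \<delta>) \<le> f (real (greedy_arm f K tb e t) / real K) +
     nsum f K tb e t (greedy_arm f K tb e t) / real (cnt f K tb e t (greedy_arm f K tb e t))"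
proof -
  define a where "a = greedy_arm f K tb e t"
  define C where "C j = cnt f K tb e t j" for j
  define S where "S j = nsum f K tb e t j" for j
  define mu where "mu j = f (real j / real K)" for j
  have finA: "finite A" using A(1) finite_subset by blast
  have ga: "\<And>j. j \<in> {1..K} \<Longrightarrow> emp_mean (greedy_hist f K tb e t) j \<le> emp_mean (greedy_hist f K tb e t) a"
    unfolding a_def by (rule greedy_props(2)[OF K1 tbv])
  have ema: "emp_mean (greedy_hist f K tb e t) a = ereal (mu a + S a / real (C a))"
    using c1 unfolding emp_mean_greedy a_def C_def S_def mu_def by simp
  have allc: "1 \<le> C j" if "j \<in> {1..K}" for j
  proof (rule ccontr)
    assume "\<not> 1 \<le> C j"
    then have "emp_mean (greedy_hist f K tb e t) j = \<infinity>" unfolding emp_mean_greedy C_def by simp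
    with ga[OF that] ema show False by simp
  qed
  have "real m \<le> real (card A)" using A(2) by simp
  also have "\<dots> = (\<Sum>j\<in>A. 1)" by simp
  also have "\<dots> \<le> (\<Sum>j\<in>A. real (C j))" using allc A(1) by (intro sum_mono) auto
  finally have mC: "real m \<le> (\<Sum>j\<in>A. real (C j))" .
  have "- \<delta> * (\<Sum>j\<in>A. S j) - (- \<delta>)\<^sup>2/2 * (\<Sum>j\<in>A. real (C j)) < \<delta>\<^sup>2 * m / 2"
    using nb unfolding Zf_set[OF finA] S_def C_def by (simp add: not_le)
  moreover have "\<delta>\<^sup>2 * real m \<le> \<delta>\<^sup>2 * (\<Sum>j\<in>A. real (C j))"
    by (rule mult_left_mono[OF mC]) simp
  moreover have "(- \<delta>)\<^sup>2/2 * (\<Sum>j\<in>A. real (C j)) = (\<delta>\<^sup>2 * (\<Sum>j\<in>A. real (C j))) / 2" by simp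
  moreover have "\<delta>\<^sup>2 * real m / 2 = (\<delta>\<^sup>2 * real m) / 2" by simp
  ultimately have "- \<delta> * (\<Sum>j\<in>A. S j) < \<delta>\<^sup>2 * (\<Sum>j\<in>A. real (C j))"
    by linarith
  then have "- \<delta> * (\<Sum>j\<in>A. S j) < \<delta> * (\<delta> * (\<Sum>j\<in>A. real (C j)))"
    by (simp add: power2_eq_square mult.assoc)
  then have "\<delta> * (- (\<Sum>j\<in>A. S j)) < \<delta> * (\<delta> * (\<Sum>j\<in>A. real (C j)))" by simp
  then have "- (\<Sum>j\<in>A. S j) < \<delta> * (\<Sum>j\<in>A. real (C j))"
    using d by (simp only: mult_less_cancel_left_pos)
  then have sumgt: "- \<delta> * (\<Sum>j\<in>A. real (C j)) < (\<Sum>j\<in>A. S j)" by simp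
  have "\<exists>j\<in>A. - \<delta> * real (C j) < S j"
  proof (rule ccontr)
    assume "\<not> (\<exists>j\<in>A. - \<delta> * real (C j) < S j)"
    then have "(\<Sum>j\<in>A. S j) \<le> (\<Sum>j\<in>A. - \<delta> * real (C j))" by (intro sum_mono) (simp add: not_less)
    also have "\<dots> = - \<delta> * (\<Sum>j\<in>A. real (C j))" by (simp add: sum_distrib_left)
    finally show False using sumgt by simp
  qed
  then obtain j where j: "j \<in> A" "- \<delta> * real (C j) < S j" by blast
  have jK: "j \<in> {1..K}" using j A by blast
  have Cj: "real (C j) > 0" using allc[OF jK] by simp
  have "- \<delta> < S j / real (C j)" using j(2) Cj by (simp add: field_simps)
  then have "fs - (g0 + \<delta>) < mu j + S j / real (C j)" using g0A[OF j(1)] unfolding mu_def by simp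
  also have "mu j + S j / real (C j) \<le> mu a + S a / real (C a)"
  proof -
    have "emp_mean (greedy_hist f K tb e t) j = ereal (mu j + S j / real (C j))"
      using allc[OF jK] unfolding emp_mean_greedy C_def S_def mu_def by simp
    with ga[OF jK] ema show ?thesis by simp
  qed
  finally show ?thesis unfolding a_def mu_def S_def C_def by simp
qed

lemma key_bad:
  fixes fs g :: real
  assumes mean: "fs - g \<le> f (real i / real K) + nsum f K tb e t i / real (cnt f K tb e t i)"
    and c1: "1 \<le> cnt f K tb e t i"
    and lp: "fs - f (real i / real K) - g > 0"
  shows "exp (real (cnt f K tb e t i) * (fs - f (real i / real K) - g)\<^sup>2 / 2) \<le>
         Zf (\<lambda>s e. greedy_arm f K tb e s \<in> {i}) (fs - f (real i / real K) - g) t e"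
proof -
  define l where "l = fs - f (real i / real K) - g"
  define n where "n = real (cnt f K tb e t i)"
  define S where "S = nsum f K tb e t i"
  have n: "n > 0" using c1 unfolding n_def by simp
  have "l \<le> S / n" using mean unfolding l_def n_def S_def by simp
  then have "n * l \<le> S" using n by (simp add: field_simps)
  then have "l * (n * l) \<le> l * S" using lp unfolding l_def by (intro mult_left_mono) auto
  then have "n * l\<^sup>2 / 2 \<le> l * S - l\<^sup>2/2 * n" by (simp add: power2_eq_square algebra_simps)
  then show ?thesis unfolding Zf_single l_def[symmetric] n_def[symmetric] S_def[symmetric] by simp
qed

definition gap where "gap f K fs i = fs - f (real i / real K)"

definition BadE where "BadE f K tb A m \<delta> T e =
  (\<exists>t\<le>T. exp (\<delta>\<^sup>2 * real m / 2) \<le> Zf (\<lambda>s e. greedy_arm f K tb e s \<in> A) (- \<delta>) t e)"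

definition EvE where "EvE f K tb fs g T i n e =
  (\<exists>t\<le>T. exp (real n * (gap f K fs i - g)\<^sup>2 / 2) \<le> Zf (\<lambda>s e. greedy_arm f K tb e s \<in> {i}) (gap f K fs i - g) t e)"

lemma sum_split3:
  fixes g :: "nat \<Rightarrow> real"
  shows "(\<Sum>t<T. g t) = (\<Sum>t\<in>{t\<in>{..<T}. P t}. g t) + (\<Sum>t\<in>{t\<in>{..<T}. \<not> P t \<and> Q t}. g t) + (\<Sum>t\<in>{t\<in>{..<T}. \<not> P t \<and> \<not> Q t}. g t)"
proof -
  have "(\<Sum>t<T. g t) = (\<Sum>t<T. (if P t then g t else 0) + (if \<not> P t \<and> Q t then g t else 0) + (if \<not> P t \<and> \<not> Q t then g t else 0))"
    by (rule sum.cong) auto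
  also have "\<dots> = (\<Sum>t<T. if P t then g t else 0) + (\<Sum>t<T. if \<not> P t \<and> Q t then g t else 0) + (\<Sum>t<T. if \<not> P t \<and> \<not> Q t then g t else 0)"
    by (simp add: sum.distrib)
  finally show ?thesis by (simp only: sum.inter_filter[OF finite_lessThan])
qed

lemma pathwise:
  fixes m :: nat and \<delta> g0 fs :: real
  assumes K1: "K \<ge> 1" and tbv: "\<And>t S. S \<noteq> {} \<Longrightarrow> S \<subseteq> {1..K} \<Longrightarrow> tb t S \<in> S"
    and A: "A \<subseteq> {1..K}" "m \<le> card A"
    and d: "\<delta> > 0" and g0A: "\<And>j. j \<in> A \<Longrightarrow> gap f K fs j \<le> g0" and g0: "g0 \<ge> 0"
    and gr: "\<And>i. i \<in> {1..K} \<Longrightarrow> 0 \<le> gap f K fs i \<and> gap f K fs i \<le> 1"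
  shows "(\<Sum>t<T. gap f K fs (greedy_arm f K tb e t)) \<le> real K + real T * (if BadE f K tb A m \<delta> T e then 1 else 0)
     + 2 * (g0 + \<delta>) * real T
     + (\<Sum>i\<in>{i\<in>{1..K}. gap f K fs i > 2 * (g0 + \<delta>)}. gap f K fs i * (\<Sum>n\<in>{1..T}. if EvE f K tb fs (g0 + \<delta>) T i n e then 1 else 0))"
proof -
  define a where "a t = greedy_arm f K tb e t" for t
  define G where "G i = gap f K fs i" for i
  define g where "g = g0 + \<delta>"
  define I where "I = {i\<in>{1..K}. G i > 2 * g}"
  define Ev where "Ev i n = EvE f K tb fs g T i n e" for i n
  have aK: "a t \<in> {1..K}" for t unfolding a_def by (rule greedy_props(1)[OF K1 tbv])
  have gpos: "g > 0" unfolding g_def using d g0 by simp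
  have Rnn: "0 \<le> (\<Sum>i\<in>I. G i * (\<Sum>n\<in>{1..T}. if Ev i n then 1 else 0))"
    unfolding I_def using gr unfolding G_def by (intro sum_nonneg mult_nonneg_nonneg) auto
  have goal: "(\<Sum>t<T. G (a t)) \<le> real K + real T * (if BadE f K tb A m \<delta> T e then 1 else 0)
     + 2 * g * real T + (\<Sum>i\<in>I. G i * (\<Sum>n\<in>{1..T}. if Ev i n then 1 else 0))"
  proof (cases "BadE f K tb A m \<delta> T e")
    case True
    have "(\<Sum>t<T. G (a t)) \<le> (\<Sum>t<T. 1)" using gr aK unfolding G_def by (intro sum_mono) auto
    moreover have "0 \<le> 2 * g * real T" using gpos by simp
    ultimately show ?thesis using True Rnn by simp
  next
    case False
    define Z0 where "Z0 = {t\<in>{..<T}. cnt f K tb e t (a t) = 0}"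
    define Sm where "Sm = {t\<in>{..<T}. \<not> cnt f K tb e t (a t) = 0 \<and> G (a t) \<le> 2 * g}"
    define Bg where "Bg = {t\<in>{..<T}. \<not> cnt f K tb e t (a t) = 0 \<and> \<not> G (a t) \<le> 2 * g}"
    have split: "(\<Sum>t<T. G (a t)) = (\<Sum>t\<in>Z0. G (a t)) + (\<Sum>t\<in>Sm. G (a t)) + (\<Sum>t\<in>Bg. G (a t))"
      unfolding Z0_def Sm_def Bg_def by (rule sum_split3)
    have z0: "(\<Sum>t\<in>Z0. G (a t)) \<le> real K"
    proof -
      have inj: "inj_on a Z0"
      proof (rule inj_onI)
        fix s t assume s: "s \<in> Z0" and t: "t \<in> Z0" and st: "a s = a t"
        show "s = t"
        proof (rule linorder_cases[of s t])
          assume "s < t"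
          then have "1 \<le> cnt f K tb e t (a t)" using cnt_pos[of s t f K tb e "a t"] st unfolding a_def by simp
          then show ?thesis using t unfolding Z0_def by simp
        next
          assume "t < s"
          then have "1 \<le> cnt f K tb e s (a s)" using cnt_pos[of t s f K tb e "a s"] st unfolding a_def by simp
          then show ?thesis using s unfolding Z0_def by simp
        qed
      qed
      have "card Z0 \<le> card {1..K}" by (rule card_inj_on_le[OF inj]) (use aK in auto)
      then have cZ: "card Z0 \<le> K" by simp
      have "(\<Sum>t\<in>Z0. G (a t)) \<le> (\<Sum>t\<in>Z0. 1)" using gr aK unfolding G_def by (intro sum_mono) auto
      also have "\<dots> = real (card Z0)" by simp
      finally show ?thesis using cZ by linarith
    qed
    have sm: "(\<Sum>t\<in>Sm. G (a t)) \<le> 2 * g * real T"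
    proof -
      have "(\<Sum>t\<in>Sm. G (a t)) \<le> (\<Sum>t\<in>Sm. 2 * g)" unfolding Sm_def by (intro sum_mono) auto
      also have "\<dots> = 2 * g * real (card Sm)" by simp
      also have "\<dots> \<le> 2 * g * real T"
      proof -
        have "card Sm \<le> card {..<T}" unfolding Sm_def by (intro card_mono) auto
        then show ?thesis using gpos by (intro mult_left_mono) auto
      qed
      finally show ?thesis .
    qed
    have bg: "(\<Sum>t\<in>Bg. G (a t)) \<le> (\<Sum>i\<in>I. G i * (\<Sum>n\<in>{1..T}. if Ev i n then 1 else 0))"
    proof -
      have "(\<Sum>t\<in>Bg. G (a t)) = (\<Sum>i\<in>I. \<Sum>t\<in>{t\<in>Bg. a t = i}. G (a t))"
        using aK by (intro sum.group[symmetric]) (auto simp: Bg_def I_def)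
      also have "\<dots> \<le> (\<Sum>i\<in>I. G i * (\<Sum>n\<in>{1..T}. if Ev i n then 1 else 0))"
      proof (rule sum_mono)
        fix i assume iI: "i \<in> I"
        have "(\<Sum>t\<in>{t\<in>Bg. a t = i}. G (a t)) = G i * real (card {t\<in>Bg. a t = i})" by simp
        also have "card {t\<in>Bg. a t = i} \<le> card {n\<in>{1..T}. Ev i n}"
        proof (rule card_inj_on_le[where f="\<lambda>t. cnt f K tb e t i"])
          show "inj_on (\<lambda>t. cnt f K tb e t i) {t\<in>Bg. a t = i}"
          proof (rule inj_onI)
            fix s t assume s: "s \<in> {t\<in>Bg. a t = i}" and t: "t \<in> {t\<in>Bg. a t = i}"
              and st: "cnt f K tb e s i = cnt f K tb e t i"
            show "s = t"
            proof (rule linorder_cases[of s t])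
              assume "s < t" then show ?thesis using cnt_strict[of s t f K tb e i] s st unfolding a_def by simp
            next
              assume "t < s" then show ?thesis using cnt_strict[of t s f K tb e i] t st unfolding a_def by simp
            qed
          qed
          show "(\<lambda>t. cnt f K tb e t i) ` {t\<in>Bg. a t = i} \<subseteq> {n\<in>{1..T}. Ev i n}"
          proof
            fix n assume "n \<in> (\<lambda>t. cnt f K tb e t i) ` {t\<in>Bg. a t = i}"
            then obtain t where t: "t \<in> Bg" "a t = i" and n: "n = cnt f K tb e t i" by blast
            have tT: "t < T" and c1: "1 \<le> cnt f K tb e t (a t)" and big: "2 * g < G (a t)"
              using t(1) unfolding Bg_def by auto
            have "n \<le> t" unfolding n by (rule cnt_le)
            then have n1: "n \<in> {1..T}" using c1 t(2) tT n by simp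
            have nb: "\<not> exp (\<delta>\<^sup>2 * real m / 2) \<le> Zf (\<lambda>s e. greedy_arm f K tb e s \<in> A) (- \<delta>) t e"
              using False tT unfolding BadE_def by auto
            have mean: "fs - (g0 + \<delta>) \<le> f (real (greedy_arm f K tb e t) / real K) +
               nsum f K tb e t (greedy_arm f K tb e t) / real (cnt f K tb e t (greedy_arm f K tb e t))"
              by (rule key_good[OF K1 tbv A d _ _ nb]) (use g0A c1 in \<open>auto simp: gap_def a_def\<close>)
            have "exp (real (cnt f K tb e t i) * (fs - f (real i / real K) - g)\<^sup>2 / 2) \<le>
                  Zf (\<lambda>s e. greedy_arm f K tb e s \<in> {i}) (fs - f (real i / real K) - g) t e"
              by (rule key_bad) (use mean c1 big t(2) gpos in \<open>auto simp: a_def g_def G_def gap_def\<close>)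
            then have "Ev i n" unfolding Ev_def EvE_def n gap_def using tT by (intro exI[of _ t]) auto
            with n1 show "n \<in> {n\<in>{1..T}. Ev i n}" by simp
          qed
        qed simp
        then have "G i * real (card {t\<in>Bg. a t = i}) \<le> G i * real (card {n\<in>{1..T}. Ev i n})"
          using iI gpos unfolding I_def by (intro mult_left_mono) auto
        also have "real (card {n\<in>{1..T}. Ev i n}) = (\<Sum>n\<in>{1..T}. if Ev i n then 1 else 0)"
        proof -
          have "{n\<in>{1..T}. Ev i n} = {1..T} \<inter> Collect (Ev i)" by auto
          then show ?thesis by (simp add: sum.If_cases)
        qed
        finally show "(\<Sum>t\<in>{t\<in>Bg. a t = i}. G (a t)) \<le> G i * (\<Sum>n\<in>{1..T}. if Ev i n then 1 else 0)"
          by simp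
      qed
      finally show ?thesis .
    qed
    show ?thesis using split z0 sm bg False by simp
  qed
  then show ?thesis unfolding a_def G_def g_def I_def Ev_def .
qed

lemma geo_eq:
  fixes r :: real assumes "r \<noteq> 1"
  shows "(\<Sum>n\<in>{1..N}. r ^ n) = (r - r ^ (N + 1)) / (1 - r)"
proof (induction N)
  case 0 then show ?case by simp
next
  case (Suc N)
  have "(\<Sum>n\<in>{1..Suc N}. r ^ n) = (\<Sum>n\<in>{1..N}. r ^ n) + r ^ Suc N" by simp
  also have "\<dots> = (r - r ^ (N + 1)) / (1 - r) + r ^ Suc N" using Suc by simp
  also have "\<dots> = (r - r ^ (Suc N + 1)) / (1 - r)" using assms
    by (simp add: field_simps)
  finally show ?case .
qed

lemma geo_exp_bound:
  fixes a :: real assumes a: "a > 0"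
  shows "(\<Sum>n\<in>{1..N}. exp (- (real n * a))) \<le> 1 / a"
proof -
  define r where "r = exp (- a)"
  have r0: "0 < r" and r1: "r < 1" unfolding r_def using a by auto
  have e: "exp (- (real n * a)) = r ^ n" for n
    unfolding r_def by (simp add: exp_of_nat_mult[symmetric])
  have "(\<Sum>n\<in>{1..N}. exp (- (real n * a))) = (r - r ^ (N + 1)) / (1 - r)"
    unfolding e using r1 by (intro geo_eq) simp
  also have "\<dots> \<le> r / (1 - r)"
    using r0 r1 by (intro divide_right_mono) auto
  also have "\<dots> \<le> 1 / a"
  proof -
    have "1 + a \<le> exp a" by (rule exp_ge_add_one_self)
    then have "r * (1 + a) \<le> r * exp a" using r0 by (intro mult_left_mono) auto
    also have "r * exp a = 1" unfolding r_def by (simp add: exp_minus)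
    finally have "r * a \<le> 1 - r" by (simp add: algebra_simps)
    then show ?thesis using r1 a by (simp add: field_simps)
  qed
  finally show ?thesis .
qed

lemma (in prob_space) expect_bound:
  fixes Y :: "'a \<Rightarrow> real" and w :: "'k \<Rightarrow> real"
  assumes Yi: "integrable M Y"
    and Yb: "\<And>\<omega>. \<omega> \<in> space M \<Longrightarrow> Y \<omega> \<le> c0 + w0 * (if P0 \<omega> then 1 else 0) + (\<Sum>k\<in>F. w k * (if P k \<omega> then 1 else 0))"
    and F: "finite F"
    and P0[measurable]: "Measurable.pred M P0" and Pk[measurable]: "\<And>k. k \<in> F \<Longrightarrow> Measurable.pred M (P k)"
  shows "(\<integral>\<omega>. Y \<omega> \<partial>M) \<le> c0 + w0 * prob {\<omega>\<in>space M. P0 \<omega>} + (\<Sum>k\<in>F. w k * prob {\<omega>\<in>space M. P k \<omega>})"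
proof -
  have ind: "integrable M (\<lambda>\<omega>. if Q \<omega> then 1 else 0::real)" and ii: "(\<integral>\<omega>. (if Q \<omega> then 1 else 0::real) \<partial>M) = prob {\<omega>\<in>space M. Q \<omega>}"
    if [measurable]: "Measurable.pred M Q" for Q
  proof -
    show "integrable M (\<lambda>\<omega>. if Q \<omega> then 1 else 0::real)"
      by (rule integrable_const_bound[where B=1]) auto
    have "(\<integral>\<omega>. (if Q \<omega> then 1 else 0::real) \<partial>M) = (\<integral>\<omega>. indicator {\<omega>\<in>space M. Q \<omega>} \<omega> \<partial>M)"
      by (rule Bochner_Integration.integral_cong) (auto simp: indicator_def)
    also have "\<dots> = prob {\<omega>\<in>space M. Q \<omega>}"
      by (simp add: Int_absorb2)
    finally show "(\<integral>\<omega>. (if Q \<omega> then 1 else 0::real) \<partial>M) = prob {\<omega>\<in>space M. Q \<omega>}" .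
  qed
  have i2: "integrable M (\<lambda>\<omega>. c0 + w0 * (if P0 \<omega> then 1 else 0) + (\<Sum>k\<in>F. w k * (if P k \<omega> then 1 else 0)))"
  proof -
    have a: "integrable M (\<lambda>\<omega>. c0)" by simp
    have b: "integrable M (\<lambda>\<omega>. w0 * (if P0 \<omega> then 1 else 0))" using ind[OF P0] by simp
    have c: "integrable M (\<lambda>\<omega>. \<Sum>k\<in>F. w k * (if P k \<omega> then 1 else 0))"
    proof (rule Bochner_Integration.integrable_sum[where f="\<lambda>k \<omega>. w k * (if P k \<omega> then 1 else 0)"])
      fix k assume "k \<in> F"
      then show "integrable M (\<lambda>\<omega>. w k * (if P k \<omega> then 1 else 0))" using ind[OF Pk] by simp
    qed
    show ?thesis by (rule Bochner_Integration.integrable_add[OF Bochner_Integration.integrable_add[OF a b] c])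
  qed
  have "(\<integral>\<omega>. Y \<omega> \<partial>M) \<le> (\<integral>\<omega>. c0 + w0 * (if P0 \<omega> then 1 else 0) + (\<Sum>k\<in>F. w k * (if P k \<omega> then 1 else 0)) \<partial>M)"
    by (rule integral_mono[OF Yi i2 Yb])
  also have "\<dots> = c0 + w0 * prob {\<omega>\<in>space M. P0 \<omega>} + (\<Sum>k\<in>F. w k * prob {\<omega>\<in>space M. P k \<omega>})"
    using ind ii P0 Pk by (simp add: Bochner_Integration.integral_add Bochner_Integration.integrable_sum Bochner_Integration.integral_sum prob_space)
  finally show ?thesis .
qed

lemma pred_arm: "Measurable.pred EE (\<lambda>e. greedy_arm f K tb e s \<in> A)"
  for tb :: "nat \<Rightarrow> nat set \<Rightarrow> nat"
  by (rule measurable_compose[OF meas_arm]) simp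

lemma sel_local: "(\<And>s. s < t \<Longrightarrow> e s = e' s) \<Longrightarrow> (greedy_arm f K tb e t \<in> A) = (greedy_arm f K tb e' t \<in> A)"
  using greedy_arm_local[of t e e' f K tb] by simp

lemma (in prob_space) ville_prob:
  fixes \<eta> :: "nat \<Rightarrow> 'a \<Rightarrow> real" and tb :: "nat \<Rightarrow> nat set \<Rightarrow> nat"
  assumes meas: "\<And>t. \<eta> t \<in> borel_measurable M"
    and ind: "indep_vars (\<lambda>_. borel) \<eta> UNIV"
    and sg: "\<And>t. subgaussian M 1 (\<eta> t)"
    and c: "c > 0"
  shows "prob {\<omega>\<in>space M. \<exists>t\<le>T. c \<le> Zf (\<lambda>s e. greedy_arm f K tb e s \<in> A) l t (\<lambda>s. \<eta> s \<omega>)} \<le> 1/c"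
proof -
  have int: "integrable M (\<lambda>\<omega>. exp (l * \<eta> t \<omega>))" for t using sg[of t] unfolding subgaussian_def by blast
  have mgf: "(\<integral>\<omega>. exp (l * \<eta> t \<omega>) \<partial>M) \<le> exp (l\<^sup>2/2)" for t using sg[of t] unfolding subgaussian_def by simp
  have "emeasure M {\<omega>\<in>space M. \<exists>t\<le>T. c \<le> Zf (\<lambda>s e. greedy_arm f K tb e s \<in> A) l t (\<lambda>s. \<eta> s \<omega>)} \<le> ennreal (1/c)"
    by (rule ville[OF meas ind int mgf pred_arm sel_local c])
  then show ?thesis using c by (simp add: emeasure_eq_measure ennreal_le_iff)
qed

lemma gap_frac:
  fixes g G :: real
  assumes "2 * g < G" "g > 0"
  shows "G * (1 / ((G - g)\<^sup>2 / 2)) \<le> 4 / g"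
proof -
  have G0: "G > 0" using assms by simp
  have "G / 2 \<le> G - g" using assms by simp
  then have sq: "(G / 2)\<^sup>2 \<le> (G - g)\<^sup>2" using G0 by (intro power_mono) auto
  have p: "(G/2)\<^sup>2 > 0" using G0 by simp
  have "G * (1 / ((G - g)\<^sup>2 / 2)) = 2 * G / (G - g)\<^sup>2" by simp
  also have "\<dots> \<le> 2 * G / (G / 2)\<^sup>2"
  proof -
    have "0 < (G - g)\<^sup>2 * (G / 2)\<^sup>2" using p sq by (intro mult_pos_pos) auto
    then show ?thesis using sq G0 by (intro divide_left_mono) auto
  qed
  also have "\<dots> = 8 / G" using G0 by (simp add: power2_eq_square field_simps)
  also have "\<dots> \<le> 8 / (2 * g)" using assms by (intro divide_left_mono) auto
  also have "\<dots> = 4 / g" by simp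
  finally show ?thesis .
qed

lemma regret_bound:
  fixes M :: "'a measure" and \<eta> :: "nat \<Rightarrow> 'a \<Rightarrow> real" and f :: "real \<Rightarrow> real" and xs :: real
    and T K :: nat and tb :: "nat \<Rightarrow> nat set \<Rightarrow> nat" and A :: "nat set" and m :: nat and \<delta> g0 :: real
  assumes PS: "prob_space M"
    and meas: "\<And>t. \<eta> t \<in> borel_measurable M"
    and ind: "prob_space.indep_vars M (\<lambda>_. borel) \<eta> UNIV"
    and sg: "\<And>t. subgaussian M 1 (\<eta> t)"
    and f01: "\<And>x. x \<in> {0..1} \<Longrightarrow> f x \<in> {0..1}"
    and fmax: "\<And>x. x \<in> {0..1} \<Longrightarrow> f x \<le> f xs" and xs01: "xs \<in> {0..1}"
    and K1: "K \<ge> 1" and tbv: "\<And>t S. S \<noteq> {} \<Longrightarrow> S \<subseteq> {1..K} \<Longrightarrow> tb t S \<in> S"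
    and A: "A \<subseteq> {1..K}" "m \<le> card A"
    and d: "\<delta> > 0" and g0: "g0 \<ge> 0" and g0A: "\<And>j. j \<in> A \<Longrightarrow> f xs - f (real j / real K) \<le> g0"
  shows "greedy_regret M f xs K tb \<eta> T \<le> real K + real T * exp (- (\<delta>\<^sup>2 * real m / 2))
           + 2 * (g0 + \<delta>) * real T + 4 * real K / (g0 + \<delta>)"
proof -
  interpret prob_space M by (rule PS)
  define g where "g = g0 + \<delta>"
  have gpos: "g > 0" unfolding g_def using d g0 by simp
  define G where "G i = gap f K (f xs) i" for i
  define X where "X \<omega> = (\<lambda>s. \<eta> s \<omega>)" for \<omega>
  have X[measurable]: "X \<in> measurable M EE"
    unfolding X_def by (rule measurable_PiM_single') (auto simp: meas)
  have am: "(\<lambda>\<omega>. greedy_arm f K tb (X \<omega>) t) \<in> measurable M (count_space UNIV)" for t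
    by (rule measurable_compose[OF X meas_arm])
  have gr: "0 \<le> G i \<and> G i \<le> 1" if "i \<in> {1..K}" for i
  proof -
    have "real i / real K \<in> {0..1}" using that by auto
    then have "0 \<le> f (real i / real K)" "f (real i / real K) \<le> f xs" using f01 fmax by auto
    moreover have "f xs \<le> 1" using f01[OF xs01] by simp
    ultimately show ?thesis unfolding G_def gap_def by simp
  qed
  have aK: "greedy_arm f K tb e t \<in> {1..K}" for e t by (rule greedy_props(1)[OF K1 tbv])
  define Y where "Y \<omega> = (\<Sum>t<T. G (greedy_arm f K tb (X \<omega>) t))" for \<omega>
  have Ym[measurable]: "Y \<in> borel_measurable M"
  proof -
    have "(\<lambda>\<omega>. G (greedy_arm f K tb (X \<omega>) t)) \<in> borel_measurable M" for t
      by (rule measurable_compose[OF am]) simp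
    then show ?thesis unfolding Y_def by (intro borel_measurable_sum) auto
  qed
  have Yb: "0 \<le> Y \<omega> \<and> Y \<omega> \<le> real T" for \<omega>
  proof -
    have "(\<Sum>t<T. G (greedy_arm f K tb (X \<omega>) t)) \<le> (\<Sum>t<T. 1)" using gr aK by (intro sum_mono) auto
    moreover have "0 \<le> (\<Sum>t<T. G (greedy_arm f K tb (X \<omega>) t))" using gr aK by (intro sum_nonneg) auto
    ultimately show ?thesis unfolding Y_def by simp
  qed
  have Yi: "integrable M Y"
    by (rule integrable_const_bound[where B="real T"]) (use Yb in auto)
  have reg: "greedy_regret M f xs K tb \<eta> T = (\<integral>\<omega>. Y \<omega> \<partial>M)"
  proof -
    have e: "(\<Sum>t<T. f (real (greedy_arm f K tb (\<lambda>s. \<eta> s \<omega>) t) / real K)) = real T * f xs - Y \<omega>" for \<omega>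
      unfolding Y_def G_def gap_def X_def by (simp add: sum_subtractf)
    have "(\<integral>\<omega>. real T * f xs - Y \<omega> \<partial>M) = (\<integral>\<omega>. real T * f xs \<partial>M) - (\<integral>\<omega>. Y \<omega> \<partial>M)"
      by (rule Bochner_Integration.integral_diff[OF _ Yi]) simp
    then show ?thesis unfolding greedy_regret_def e by (simp add: prob_space)
  qed
  define I where "I = {i\<in>{1..K}. G i > 2 * g}"
  define N where "N = {1..T}"
  define Bad where "Bad \<omega> = BadE f K tb A m \<delta> T (X \<omega>)" for \<omega>
  define Ev where "Ev k \<omega> = EvE f K tb (f xs) g T (fst k) (snd k) (X \<omega>)" for k \<omega>
  have path: "Y \<omega> \<le> (real K + 2 * g * real T) + real T * (if Bad \<omega> then 1 else 0) +
      (\<Sum>k\<in>I \<times> N. G (fst k) * (if Ev k \<omega> then 1 else 0))" for \<omega>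
  proof -
    have "Y \<omega> \<le> real K + real T * (if Bad \<omega> then 1 else 0) + 2 * g * real T
       + (\<Sum>i\<in>I. G i * (\<Sum>n\<in>N. if EvE f K tb (f xs) g T i n (X \<omega>) then 1 else 0))"
      unfolding Y_def Bad_def I_def N_def G_def g_def
      by (rule pathwise[OF K1 tbv A d _ g0]) (use g0A gr in \<open>auto simp: gap_def G_def\<close>)
    also have "(\<Sum>i\<in>I. G i * (\<Sum>n\<in>N. if EvE f K tb (f xs) g T i n (X \<omega>) then 1 else 0)) =
        (\<Sum>k\<in>I \<times> N. G (fst k) * (if Ev k \<omega> then 1 else 0))"
      unfolding Ev_def sum_distrib_left sum.cartesian_product by (rule sum.cong) auto
    finally show ?thesis by simp
  qed
  note [measurable] = Zf_meas[OF pred_arm]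
  have Badm[measurable]: "Measurable.pred M Bad"
    unfolding Bad_def BadE_def by measurable
  have Evm[measurable]: "Measurable.pred M (Ev k)" for k
    unfolding Ev_def EvE_def by measurable
  have ind': "indep_vars (\<lambda>_. borel) \<eta> UNIV" using ind .
  have E1: "(\<integral>\<omega>. Y \<omega> \<partial>M) \<le> (real K + 2 * g * real T) + real T * prob {\<omega>\<in>space M. Bad \<omega>} +
      (\<Sum>k\<in>I \<times> N. G (fst k) * prob {\<omega>\<in>space M. Ev k \<omega>})"
    by (rule expect_bound[OF Yi path]) (auto simp: I_def N_def)
  have PB: "prob {\<omega>\<in>space M. Bad \<omega>} \<le> exp (- (\<delta>\<^sup>2 * real m / 2))"
  proof -
    have "prob {\<omega>\<in>space M. Bad \<omega>} \<le> 1 / exp (\<delta>\<^sup>2 * real m / 2)"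
      unfolding Bad_def BadE_def X_def by (rule ville_prob[OF meas ind' sg]) simp
    then show ?thesis by (simp add: exp_minus inverse_eq_divide)
  qed
  have PE: "prob {\<omega>\<in>space M. Ev (i, n) \<omega>} \<le> exp (- (real n * ((G i - g)\<^sup>2 / 2)))" for i n
  proof -
    have "prob {\<omega>\<in>space M. Ev (i, n) \<omega>} \<le> 1 / exp (real n * (G i - g)\<^sup>2 / 2)"
      unfolding Ev_def EvE_def X_def G_def by (simp only: fst_conv snd_conv) (rule ville_prob[OF meas ind' sg], simp)
    then show ?thesis by (simp add: exp_minus inverse_eq_divide)
  qed
  have S: "(\<Sum>k\<in>I \<times> N. G (fst k) * prob {\<omega>\<in>space M. Ev k \<omega>}) \<le> real K * (4 / g)"
  proof -
    have "(\<Sum>k\<in>I \<times> N. G (fst k) * prob {\<omega>\<in>space M. Ev k \<omega>}) = (\<Sum>i\<in>I. \<Sum>n\<in>N. G i * prob {\<omega>\<in>space M. Ev (i, n) \<omega>})"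
      unfolding sum.cartesian_product by (rule sum.cong) auto
    also have "\<dots> \<le> (\<Sum>i\<in>I. 4 / g)"
    proof (rule sum_mono)
      fix i assume iI: "i \<in> I"
      then have big: "2 * g < G i" unfolding I_def by simp
      have a: "(G i - g)\<^sup>2 / 2 > 0" using big gpos by simp
      have "(\<Sum>n\<in>N. G i * prob {\<omega>\<in>space M. Ev (i, n) \<omega>}) \<le> (\<Sum>n\<in>N. G i * exp (- (real n * ((G i - g)\<^sup>2 / 2))))"
        using big gpos PE by (intro sum_mono mult_left_mono) auto
      also have "\<dots> = G i * (\<Sum>n\<in>N. exp (- (real n * ((G i - g)\<^sup>2 / 2))))" by (simp add: sum_distrib_left)
      also have "\<dots> \<le> G i * (1 / ((G i - g)\<^sup>2 / 2))"
        unfolding N_def using big gpos by (intro mult_left_mono geo_exp_bound a) auto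
      also have "\<dots> \<le> 4 / g" by (rule gap_frac[OF big gpos])
      finally show "(\<Sum>n\<in>N. G i * prob {\<omega>\<in>space M. Ev (i, n) \<omega>}) \<le> 4 / g" .
    qed
    also have "\<dots> = real (card I) * (4 / g)" by simp
    also have "\<dots> \<le> real K * (4 / g)"
    proof -
      have "card I \<le> card {1..K}" unfolding I_def by (intro card_mono) auto
      then show ?thesis using gpos by (intro mult_right_mono) auto
    qed
    finally show ?thesis .
  qed
  have "real T * prob {\<omega>\<in>space M. Bad \<omega>} \<le> real T * exp (- (\<delta>\<^sup>2 * real m / 2))"
    using PB by (intro mult_left_mono) auto
  then have "(\<integral>\<omega>. Y \<omega> \<partial>M) \<le> real K + 2 * g * real T + real T * exp (- (\<delta>\<^sup>2 * real m / 2)) + real K * (4 / g)"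
    using E1 S by linarith
  moreover have "real K * (4 / g) = 4 * real K / g" by simp
  ultimately have "(\<integral>\<omega>. Y \<omega> \<partial>M) \<le> real K + real T * exp (- (\<delta>\<^sup>2 * real m / 2)) + 2 * g * real T + 4 * real K / g"
    by linarith
  then show ?thesis unfolding reg g_def .
qed

lemma regret_le_T:
  fixes M :: "'a measure" and \<eta> :: "nat \<Rightarrow> 'a \<Rightarrow> real" and f :: "real \<Rightarrow> real" and xs :: real
    and T K :: nat and tb :: "nat \<Rightarrow> nat set \<Rightarrow> nat"
  assumes PS: "prob_space M"
    and meas: "\<And>t. \<eta> t \<in> borel_measurable M"
    and f01: "\<And>x. x \<in> {0..1} \<Longrightarrow> f x \<in> {0..1}"
    and fmax: "\<And>x. x \<in> {0..1} \<Longrightarrow> f x \<le> f xs" and xs01: "xs \<in> {0..1}"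
    and K1: "K \<ge> 1" and tbv: "\<And>t S. S \<noteq> {} \<Longrightarrow> S \<subseteq> {1..K} \<Longrightarrow> tb t S \<in> S"
  shows "greedy_regret M f xs K tb \<eta> T \<le> real T"
proof -
  interpret prob_space M by (rule PS)
  define G where "G i = gap f K (f xs) i" for i
  define X where "X \<omega> = (\<lambda>s. \<eta> s \<omega>)" for \<omega>
  have X[measurable]: "X \<in> measurable M EE"
    unfolding X_def by (rule measurable_PiM_single') (auto simp: meas)
  have am: "(\<lambda>\<omega>. greedy_arm f K tb (X \<omega>) t) \<in> measurable M (count_space UNIV)" for t
    by (rule measurable_compose[OF X meas_arm])
  have gr: "0 \<le> G i \<and> G i \<le> 1" if "i \<in> {1..K}" for i
  proof -
    have "real i / real K \<in> {0..1}" using that by auto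
    then have "0 \<le> f (real i / real K)" "f (real i / real K) \<le> f xs" using f01 fmax by auto
    moreover have "f xs \<le> 1" using f01[OF xs01] by simp
    ultimately show ?thesis unfolding G_def gap_def by simp
  qed
  have aK: "greedy_arm f K tb e t \<in> {1..K}" for e t by (rule greedy_props(1)[OF K1 tbv])
  define Y where "Y \<omega> = (\<Sum>t<T. G (greedy_arm f K tb (X \<omega>) t))" for \<omega>
  have Ym[measurable]: "Y \<in> borel_measurable M"
  proof -
    have "(\<lambda>\<omega>. G (greedy_arm f K tb (X \<omega>) t)) \<in> borel_measurable M" for t
      by (rule measurable_compose[OF am]) simp
    then show ?thesis unfolding Y_def by (intro borel_measurable_sum) auto
  qed
  have Yb: "0 \<le> Y \<omega> \<and> Y \<omega> \<le> real T" for \<omega>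
  proof -
    have "(\<Sum>t<T. G (greedy_arm f K tb (X \<omega>) t)) \<le> (\<Sum>t<T. 1)" using gr aK by (intro sum_mono) auto
    moreover have "0 \<le> (\<Sum>t<T. G (greedy_arm f K tb (X \<omega>) t))" using gr aK by (intro sum_nonneg) auto
    ultimately show ?thesis unfolding Y_def by simp
  qed
  have Yi: "integrable M Y"
    by (rule integrable_const_bound[where B="real T"]) (use Yb in auto)
  have reg: "greedy_regret M f xs K tb \<eta> T = (\<integral>\<omega>. Y \<omega> \<partial>M)"
  proof -
    have e: "(\<Sum>t<T. f (real (greedy_arm f K tb (\<lambda>s. \<eta> s \<omega>) t) / real K)) = real T * f xs - Y \<omega>" for \<omega>
      unfolding Y_def G_def gap_def X_def by (simp add: sum_subtractf)
    have "(\<integral>\<omega>. real T * f xs - Y \<omega> \<partial>M) = (\<integral>\<omega>. real T * f xs \<partial>M) - (\<integral>\<omega>. Y \<omega> \<partial>M)"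
      by (rule Bochner_Integration.integral_diff[OF _ Yi]) simp
    then show ?thesis unfolding greedy_regret_def e by (simp add: prob_space)
  qed
  have "(\<integral>\<omega>. Y \<omega> \<partial>M) \<le> (\<integral>\<omega>. real T \<partial>M)"
    by (rule integral_mono[OF Yi]) (use Yb in auto)
  then show ?thesis unfolding reg by (simp add: prob_space)
qed

lemma arms_near:
  fixes c :: real and m K :: nat
  assumes "1 \<le> m" "m \<le> K" "0 \<le> c" "c \<le> real K"
  shows "m \<le> card {i\<in>{1..K}. \<bar>real i - c\<bar> \<le> real m}"
proof -
  define b where "b = nat \<lceil>c\<rceil>"
  define a0 where "a0 = max 1 (min (K + 1 - m) b)"
  have bc: "c \<le> real b" "real b < c + 1" unfolding b_def using assms(3)
    by (auto simp: of_nat_nat ceiling_correct) (linarith)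
  have sub: "{a0..<a0 + m} \<subseteq> {i\<in>{1..K}. \<bar>real i - c\<bar> \<le> real m}"
  proof
    fix i assume i: "i \<in> {a0..<a0 + m}"
    have a1: "1 \<le> a0" and a2: "a0 \<le> K + 1 - m" unfolding a0_def using assms by auto
    have "1 \<le> i" "i \<le> K" using i a1 a2 assms by auto
    moreover have "\<bar>real i - c\<bar> \<le> real m"
    proof (cases "b = 0")
      case True
      then have "a0 = 1" unfolding a0_def by simp
      then show ?thesis using i True bc assms(3) by auto
    next
      case False
      show ?thesis
      proof (cases "b \<le> K + 1 - m")
        case True
        then have "a0 = b" unfolding a0_def using False by simp
        then show ?thesis using i bc by auto
      next
        case F2: False
        then have "a0 = K + 1 - m" unfolding a0_def using assms by simp
        then have "real a0 = real K + 1 - real m" using assms by simp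
        moreover have "real b \<ge> real K + 2 - real m" using F2 assms by linarith
        ultimately show ?thesis using i bc assms by auto
      qed
    qed
    ultimately show "i \<in> {i\<in>{1..K}. \<bar>real i - c\<bar> \<le> real m}" by simp
  qed
  have "card {a0..<a0 + m} \<le> card {i\<in>{1..K}. \<bar>real i - c\<bar> \<le> real m}"
    by (rule card_mono[OF _ sub]) simp
  then show ?thesis by simp
qed

lemma disc_K_bounds:
  assumes "T \<ge> 2"
  shows "sqrt (4/3 * real T * ln (real T)) \<le> real (disc_K T)"
    and "real (disc_K T) \<le> sqrt (4/3 * real T * ln (real T)) + 1"
    and "1 \<le> disc_K T"
proof -
  have pos: "0 < sqrt (4/3 * real T * ln (real T))" using assms by simp
  show "sqrt (4/3 * real T * ln (real T)) \<le> real (disc_K T)"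
    unfolding disc_K_def using pos by (simp add: of_nat_nat)
  show "real (disc_K T) \<le> sqrt (4/3 * real T * ln (real T)) + 1"
    unfolding disc_K_def using pos by (simp add: of_nat_nat)
  have c: "1 \<le> \<lceil>sqrt (4/3 * real T * ln (real T))\<rceil>" using pos by simp
  have "nat 1 \<le> nat \<lceil>sqrt (4/3 * real T * ln (real T))\<rceil>" by (rule nat_mono[OF c])
  then show "1 \<le> disc_K T" unfolding disc_K_def by simp
qed

lemma powr_1add: "(x::real) > 0 \<Longrightarrow> x powr (1 + y) = x * x powr y"
  by (simp add: powr_add)

lemma powr_ids:
  fixes L T a :: real
  assumes L: "L > 0" and T: "T > 0" and a: "a > 0"
  defines "p \<equiv> 1/(2*a+1)" and "e \<equiv> (3*a+2)/(4*a+2)"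
  defines "\<rho> \<equiv> L powr (-2*p) * T powr (-p/2)"
  shows "L * \<rho> powr a * T = L powr p * T powr e"
    and "T powr (3/2) = \<rho> * (L powr p * T powr e)\<^sup>2"
    and "\<rho> * (L powr p)\<^sup>2 = T powr (-p/2)"
    and "3/4 \<le> e" and "e \<le> 1"
    and "T powr (-p/2) * T powr (2*e - 2) = T powr (-1/2)"
proof -
  have a1: "2*a+1 > 0" "4*a+2 > 0" using a by auto
  have E2: "1 - 2 * p * a = p" unfolding p_def using a1 by (simp add: field_simps)
  have E1: "e = 3/4 + p/4" unfolding p_def e_def using a1 by (simp add: field_simps)
  have E3: "1 - p * a / 2 = e" using E1 E2 by (simp add: algebra_simps)
  have E4: "2 * p + (- 2 * p) = 0" by simp
  have E5: "- p / 2 + 2 * e = 3/2" using E1 by simp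
  have "\<rho> powr a = L powr (-2*p*a) * T powr (-p/2*a)"
    unfolding \<rho>_def using L T by (simp add: powr_mult powr_powr)
  then have "L * \<rho> powr a * T = (L * L powr (-2*p*a)) * (T * T powr (-p/2*a))"
    by (simp add: algebra_simps)
  also have "L * L powr (-2*p*a) = L powr (1 + (-2*p*a))" using powr_1add[OF L] by metis
  also have "T * T powr (-p/2*a) = T powr (1 + (-p/2*a))" using powr_1add[OF T] by metis
  also have "1 + (-2*p*a) = p" using E2 by simp
  also have "1 + (-p/2*a) = e" using E3 by simp
  finally show "L * \<rho> powr a * T = L powr p * T powr e" .
  have sq: "(L powr p)\<^sup>2 = L powr (2*p)" using L by (simp add: power2_eq_square powr_add[symmetric])
  have sqT: "(T powr e)\<^sup>2 = T powr (2*e)" using T by (simp add: power2_eq_square powr_add[symmetric])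
  have rl: "\<rho> * (L powr p)\<^sup>2 = T powr (-p/2)"
  proof -
    have "\<rho> * (L powr p)\<^sup>2 = (L powr (-2*p) * L powr (2*p)) * T powr (-p/2)"
      unfolding \<rho>_def sq by (simp add: algebra_simps)
    also have "L powr (-2*p) * L powr (2*p) = 1" using L by (simp add: powr_add[symmetric])
    finally show ?thesis by simp
  qed
  then show "\<rho> * (L powr p)\<^sup>2 = T powr (-p/2)" .
  have "\<rho> * (L powr p * T powr e)\<^sup>2 = (\<rho> * (L powr p)\<^sup>2) * (T powr e)\<^sup>2" by (simp add: power_mult_distrib)
  also have "\<dots> = T powr (-p/2) * T powr (2*e)"
    unfolding sqT rl ..
  also have "\<dots> = T powr (3/2)" unfolding powr_add[symmetric] E5 ..
  finally show "T powr (3/2) = \<rho> * (L powr p * T powr e)\<^sup>2" ..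
  have p01: "0 < p" "p \<le> 1" unfolding p_def using a1 a by (auto simp: field_simps)
  show "3/4 \<le> e" using E1 p01 by simp
  show "e \<le> 1" using E1 p01 by simp
  have E6: "- p / 2 + (2 * e - 2) = -1/2" using E5 by simp
  show "T powr (-p/2) * T powr (2*e - 2) = T powr (-1/2)" unfolding powr_add[symmetric] E6 ..
qed

lemma ln2_ge: "ln (2::real) \<ge> 1/2"
proof -
  have "exp (1/2::real) * exp (1/2) = exp 1" by (simp add: exp_add[symmetric])
  also have "\<dots> \<le> 3" by (rule exp_le)
  finally have "exp (1/2::real) * exp (1/2) \<le> 3" .
  moreover have "exp (1/2::real) \<le> 2"
  proof (rule ccontr)
    assume "\<not> exp (1/2::real) \<le> 2"
    then have "2 < exp (1/2::real)" by simp
    then have "2 * 2 < exp (1/2::real) * exp (1/2)" by (intro mult_strict_mono) auto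
    with \<open>exp (1/2::real) * exp (1/2) \<le> 3\<close> show False by simp
  qed
  ultimately have "exp (1/2::real) \<le> 2" by simp
  then show ?thesis by (subst ln_ge_iff) auto
qed

lemma analytic:
  fixes R L \<alpha> :: real and T K :: nat
  assumes T2: "T \<ge> 2" and L: "L > 0" and a: "\<alpha> > 0"
    and Kl: "sqrt (4/3 * real T * ln (real T)) \<le> real K"
    and Ku: "real K \<le> sqrt (4/3 * real T * ln (real T)) + 1"
    and H1: "R \<le> real T"
    and H2: "\<And>m \<delta> g0. 1 \<le> m \<Longrightarrow> m \<le> K \<Longrightarrow> \<delta> > 0 \<Longrightarrow> L * (real m / real K) powr \<alpha> \<le> g0 \<Longrightarrow>
              R \<le> real K + real T * exp (- (\<delta>\<^sup>2 * real m / 2)) + 2 * (g0 + \<delta>) * real T + 4 * real K / (g0 + \<delta>)"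
  shows "R \<le> 15 * max (L powr (1/(2*\<alpha>+1))) (L powr (-1/(2*\<alpha>+1))) * real T powr ((3*\<alpha>+2)/(4*\<alpha>+2)) * sqrt (ln (real T)) + 1"
proof -
  define p where "p = 1/(2*\<alpha>+1)"
  define e where "e = (3*\<alpha>+2)/(4*\<alpha>+2)"
  define P where "P = max (L powr p) (L powr (-p))"
  define u where "u = sqrt (ln (real T))"
  define \<Phi> where "\<Phi> = P * real T powr e"
  define \<rho> where "\<rho> = L powr (-2*p) * real T powr (-p/2)"
  have mp: "-1/(2*\<alpha>+1) = -p" unfolding p_def by simp
  have G: "15 * max (L powr (1/(2*\<alpha>+1))) (L powr (-1/(2*\<alpha>+1))) * real T powr ((3*\<alpha>+2)/(4*\<alpha>+2)) * sqrt (ln (real T)) + 1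
         = 15 * (u * \<Phi>) + 1"
    unfolding mp unfolding p_def[symmetric] e_def[symmetric] P_def[symmetric] u_def[symmetric] \<Phi>_def by simp
  have Tpos: "real T > 0" and T1: "1 \<le> real T" using T2 by auto
  have lnpos: "ln (real T) > 0" using T2 by simp
  have u0: "u \<ge> 0" unfolding u_def using lnpos by simp
  have p0: "p > 0" unfolding p_def using a by simp
  have Pge: "L powr p \<le> P" unfolding P_def by simp
  have P1: "1 \<le> P"
  proof (rule ccontr)
    assume "\<not> 1 \<le> P"
    then have x: "L powr p < 1" "L powr (-p) < 1" unfolding P_def by auto
    have "L powr p * L powr (-p) < 1 * 1" using x L by (intro mult_strict_mono) auto
    moreover have "L powr p * L powr (-p) = 1" using L by (simp add: powr_add[symmetric])
    ultimately show False by simp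
  qed
  have ids: "L * \<rho> powr \<alpha> * real T = L powr p * real T powr e"
      "real T powr (3/2) = \<rho> * (L powr p * real T powr e)\<^sup>2"
      "\<rho> * (L powr p)\<^sup>2 = real T powr (-p/2)"
      "3/4 \<le> e" "e \<le> 1"
      "real T powr (-p/2) * real T powr (2*e - 2) = real T powr (-1/2)"
    using powr_ids[OF L Tpos a] unfolding p_def[symmetric] e_def[symmetric] \<rho>_def by auto
  have T34: "real T powr (3/4) \<le> real T powr e" using ids(4) T1 by (rule powr_mono)
  have Te0: "0 < real T powr e" using Tpos by simp
  have Phi34: "real T powr (3/4) \<le> \<Phi>"
  proof -
    have "real T powr e \<le> \<Phi>" unfolding \<Phi>_def using P1 Te0 by simp
    then show ?thesis using T34 by linarith
  qed
  have Phi0: "0 < \<Phi>" unfolding \<Phi>_def using P1 Te0 by simp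
  show ?thesis
  proof (cases "real T \<le> 15 * (u * \<Phi>)")
    case True
    then show ?thesis unfolding G using H1 by simp
  next
    case False
    then have NT: "15 * (u * \<Phi>) < real T" by simp
    have Tsplit: "real T = real T powr (3/4) * real T powr (1/4)"
      using Tpos by (simp add: powr_add[symmetric])
    have "15 * u * real T powr (3/4) \<le> 15 * (u * \<Phi>)" using Phi34 u0 by (simp add: mult_left_mono)
    then have "15 * u * real T powr (3/4) < real T powr (3/4) * real T powr (1/4)" using NT Tsplit by linarith
    then have N1: "15 * u < real T powr (1/4)" using Tpos by (simp add: mult.commute)
    have half: "real T powr (1/2) = real T powr (1/4) * real T powr (1/4)"
      using Tpos by (simp add: powr_add[symmetric])
    have N2: "225 * ln (real T) < real T powr (1/2)"
    proof -
      have "(15 * u) * (15 * u) < real T powr (1/4) * real T powr (1/4)"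
        using N1 u0 Tpos by (intro mult_strict_mono) auto
      moreover have "(15 * u) * (15 * u) = 225 * ln (real T)" unfolding u_def using lnpos by simp
      ultimately show ?thesis unfolding half by simp
    qed
    have sq: "real T powr (1/2) = sqrt (real T)" using Tpos by (simp add: powr_half_sqrt)
    have T3: "T \<ge> 3"
    proof (rule ccontr)
      assume "\<not> T \<ge> 3"
      then have "T = 2" using T2 by simp
      then have "225 * ln 2 < sqrt 2" using N2 sq by simp
      moreover have "sqrt (2::real) < 2"
      proof -
        have h: "sqrt (2::real) < sqrt 4" by (rule real_sqrt_less_mono) simp
        have "sqrt (4::real) = 2" by (rule real_sqrt_unique) auto
        then show ?thesis using h by linarith
      qed
      ultimately show False using ln2_ge by simp
    qed
    have ln1: "1 \<le> ln (real T)"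
    proof -
      have "exp 1 \<le> real T" using exp_le T3 by simp
      then show ?thesis using Tpos by (subst ln_ge_iff) auto
    qed
    have u1: "1 \<le> u" unfolding u_def using ln1 by simp
    define w where "w = real T powr (1/2)"
    have w0: "w > 0" unfolding w_def using Tpos by simp
    have ww: "w * w = real T" unfolding w_def half using Tpos by (simp add: powr_add[symmetric])
    have w225: "225 \<le> w" using N2 ln1 unfolding w_def by linarith
    have wu225: "225 \<le> w * u"
    proof -
      have "w * 1 \<le> w * u" using u1 w0 by (intro mult_left_mono) auto
      then show ?thesis using w225 by linarith
    qed
    have sqTl: "sqrt (real T * ln (real T)) = w * u" unfolding w_def sq u_def by (simp add: real_sqrt_mult)
    have Kl': "w * u \<le> real K"
    proof -
      have "sqrt (real T * ln (real T)) \<le> sqrt (4/3 * real T * ln (real T))"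
        using Tpos lnpos by (intro real_sqrt_le_mono) auto
      then show ?thesis using Kl sqTl by simp
    qed
    have Ku': "real K \<le> 7/6 * (w * u)"
    proof -
      have s43: "sqrt (4/3::real) \<le> 116/100"
      proof -
        have "sqrt (4/3::real) \<le> sqrt ((116/100)\<^sup>2)" by (rule real_sqrt_le_mono) (simp add: power2_eq_square)
        then show ?thesis by simp
      qed
      have "sqrt (4/3 * real T * ln (real T)) = sqrt (4/3) * (w * u)"
        unfolding sqTl[symmetric] by (simp add: real_sqrt_mult[symmetric] mult.assoc)
      also have "\<dots> \<le> 116/100 * (w * u)" using s43 w0 u0 by (intro mult_right_mono) auto
      finally show ?thesis using Ku wu225 by linarith
    qed
    have K1: "1 \<le> K" using Kl' wu225 by simp
    have rho0: "\<rho> > 0" unfolding \<rho>_def using L Tpos by simp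
    define \<Lambda> where "\<Lambda> = L powr p"
    have Lam0: "\<Lambda> > 0" unfolding \<Lambda>_def using L by simp
    have F4: "225 \<le> real K * \<rho>"
    proof -
      have a1: "\<Lambda> * real T powr e \<le> \<Phi>" unfolding \<Phi>_def \<Lambda>_def using Pge Te0 by (simp add: mult_right_mono)
      have "15 * u * (\<Lambda> * real T powr e) \<le> 15 * u * \<Phi>" using a1 u0 by (intro mult_left_mono) auto
      then have a2: "(15 * u * \<Lambda>) * real T powr e < real T powr (1 - e) * real T powr e"
        using NT Tpos by (simp add: powr_add[symmetric] mult.assoc)
      have a3: "15 * u * \<Lambda> < real T powr (1 - e)" using a2 Te0 by simp
      have a4: "(15 * u * \<Lambda>)\<^sup>2 < (real T powr (1 - e))\<^sup>2"
        using a3 u0 Lam0 by (intro power_strict_mono) auto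
      have a5: "(real T powr (1 - e))\<^sup>2 = real T powr (2 - 2*e)"
        using Tpos by (simp add: power2_eq_square powr_add[symmetric])
      define Q where "Q = \<rho> * real T powr (2*e - 2)"
      have Q0: "Q > 0" unfolding Q_def using rho0 Tpos by simp
      have a6: "(15 * u * \<Lambda>)\<^sup>2 * Q < real T powr (2 - 2*e) * Q"
        using a4 a5 Q0 by simp
      have a7: "real T powr (2 - 2*e) * Q = \<rho>"
        unfolding Q_def using Tpos by (simp add: powr_add[symmetric] mult.commute mult.left_commute)
      have a8: "(15 * u * \<Lambda>)\<^sup>2 * Q = 225 * u\<^sup>2 * ((\<rho> * \<Lambda>\<^sup>2) * real T powr (2*e - 2))"
        unfolding Q_def by (simp add: power_mult_distrib algebra_simps)
      have a9: "(\<rho> * \<Lambda>\<^sup>2) * real T powr (2*e - 2) = real T powr (-1/2)"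
        unfolding \<Lambda>_def using ids(3) ids(6) by simp
      have r225: "225 * u\<^sup>2 * real T powr (-1/2) < \<rho>" using a6 a7 a8 a9 by simp
      have wT: "w * real T powr (-1/2) = 1" unfolding w_def using Tpos by (simp add: powr_add[symmetric])
      have "w * u * (225 * u\<^sup>2 * real T powr (-1/2)) \<le> w * u * \<rho>"
        using r225 w0 u0 by (intro mult_left_mono) auto
      moreover have "w * u * (225 * u\<^sup>2 * real T powr (-1/2)) = 225 * u^3 * (w * real T powr (-1/2))"
        by (simp add: power2_eq_square power3_eq_cube algebra_simps)
      moreover have "w * u * \<rho> \<le> real K * \<rho>" using Kl' rho0 by (intro mult_right_mono) auto
      moreover have "1 \<le> u^3" using u1 by simp
      ultimately show ?thesis unfolding wT by simp
    qed
    have LTe: "\<Lambda> * real T powr e \<le> \<Phi>" unfolding \<Phi>_def \<Lambda>_def using Pge Te0 by (simp add: mult_right_mono)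
    have LTe0: "0 \<le> \<Lambda> * real T powr e" using Lam0 Te0 by simp
    have Tw: "real T powr (3/2) = real T * w" using powr_1add[OF Tpos, of "1/2"] unfolding w_def by simp
    have T32: "real T * w \<le> \<Phi>\<^sup>2"
    proof -
      have "(real T powr (3/4))\<^sup>2 \<le> \<Phi>\<^sup>2" using Phi34 Tpos by (intro power_mono) auto
      moreover have "(real T powr (3/4))\<^sup>2 = real T powr (3/2)" using Tpos by (simp add: power2_eq_square powr_add[symmetric])
      ultimately show ?thesis using Tw by simp
    qed
    have wPhi: "w \<le> \<Phi>"
    proof -
      have "w \<le> real T powr (3/4)" unfolding w_def using T1 by (intro powr_mono) auto
      then show ?thesis using Phi34 by linarith
    qed
    define m where "m = min K (nat \<lfloor>real K * \<rho>\<rfloor>)"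
    have fl: "2 \<le> \<lfloor>real K * \<rho>\<rfloor>" using F4 by (simp add: le_floor_iff)
    have fl2: "nat 2 \<le> nat \<lfloor>real K * \<rho>\<rfloor>" by (rule nat_mono[OF fl])
    have m1: "1 \<le> m" unfolding m_def using K1 fl2 by simp
    have mK: "m \<le> K" unfolding m_def by simp
    have mle: "real m \<le> real K * \<rho>"
    proof -
      have "real m \<le> real (nat \<lfloor>real K * \<rho>\<rfloor>)" unfolding m_def by simp
      also have "\<dots> = of_int \<lfloor>real K * \<rho>\<rfloor>" using fl by simp
      also have "\<dots> \<le> real K * \<rho>" by (rule of_int_floor_le)
      finally show ?thesis .
    qed
    have mcase: "real m = real K \<or> real K * \<rho> \<le> 2 * real m"
    proof (cases "K \<le> nat \<lfloor>real K * \<rho>\<rfloor>")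
      case True then show ?thesis unfolding m_def by simp
    next
      case False
      then have "m = nat \<lfloor>real K * \<rho>\<rfloor>" unfolding m_def by simp
      then have "real m = of_int \<lfloor>real K * \<rho>\<rfloor>" using fl by simp
      moreover have "real K * \<rho> < of_int \<lfloor>real K * \<rho>\<rfloor> + 1" by (rule real_of_int_floor_add_one_gt)
      ultimately have "real K * \<rho> \<le> 2 * real m" using F4 by linarith
      then show ?thesis by simp
    qed
    have m0: "real m > 0" using m1 by simp
    have Kpos: "real K > 0" using K1 by simp
    define g0 where "g0 = L * \<rho> powr \<alpha>"
    have g00: "g0 \<ge> 0" unfolding g0_def using L by simp
    have gcond: "L * (real m / real K) powr \<alpha> \<le> g0"
    proof -
      have "real m / real K \<le> \<rho>" using mle Kpos by (simp add: field_simps)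
      then have "(real m / real K) powr \<alpha> \<le> \<rho> powr \<alpha>" using a m0 Kpos by (intro powr_mono2) auto
      then show ?thesis unfolding g0_def using L by simp
    qed
    define \<delta> where "\<delta> = sqrt (2 * ln (real T) / real m)"
    have d0: "\<delta> > 0" unfolding \<delta>_def using lnpos m0 by simp
    have dsq: "\<delta>\<^sup>2 = 2 * u\<^sup>2 / real m" unfolding \<delta>_def u_def using lnpos m0 by simp
    have ex1: "real T * exp (- (\<delta>\<^sup>2 * real m / 2)) = 1"
    proof -
      have "\<delta>\<^sup>2 * real m / 2 = ln (real T)" unfolding dsq u_def using lnpos m0 by simp
      then show ?thesis using Tpos by (simp add: exp_minus)
    qed
    have R1: "R \<le> real K + 1 + 2 * (g0 * real T) + 2 * (\<delta> * real T) + 4 * real K / (g0 + \<delta>)"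
      using H2[OF m1 mK d0 gcond] ex1 by (simp add: algebra_simps)
    have B1: "g0 * real T \<le> \<Phi>"
      using ids(1) LTe unfolding g0_def \<Lambda>_def by simp
    have TT: "real T * real T \<le> 2 * \<Phi>\<^sup>2 * real m"
    proof -
      have TTw: "real T * real T = (real T * w) * w" using ww by (simp add: algebra_simps)
      have "w * 1 \<le> w * u" using u1 w0 by (intro mult_left_mono) auto
      then have wle: "w \<le> w * u" by simp
      from mcase show ?thesis
      proof
        assume mk: "real m = real K"
        have "(real T * w) * w \<le> \<Phi>\<^sup>2 * w" using T32 w0 by (intro mult_right_mono) auto
        also have "\<dots> \<le> \<Phi>\<^sup>2 * (w * u)" using wle by (intro mult_left_mono) auto
        also have "\<dots> \<le> \<Phi>\<^sup>2 * real K" using Kl' by (intro mult_left_mono) auto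
        finally have x: "(real T * w) * w \<le> \<Phi>\<^sup>2 * real K" .
        have "0 \<le> \<Phi>\<^sup>2 * real K" using Kpos by simp
        then have "(real T * w) * w \<le> 2 * \<Phi>\<^sup>2 * real K" using x by linarith
        then show ?thesis unfolding TTw mk .
      next
        assume mk: "real K * \<rho> \<le> 2 * real m"
        have "(real T * w) * w = \<rho> * (\<Lambda> * real T powr e)\<^sup>2 * w" using Tw ids(2) unfolding \<Lambda>_def by simp
        also have "\<dots> \<le> \<rho> * \<Phi>\<^sup>2 * w" using LTe LTe0 rho0 w0
          by (intro mult_right_mono mult_left_mono power_mono) auto
        also have "\<dots> \<le> \<rho> * \<Phi>\<^sup>2 * (w * u)" using wle rho0 by (intro mult_left_mono) auto
        also have "\<dots> \<le> \<rho> * \<Phi>\<^sup>2 * real K" using Kl' rho0 by (intro mult_left_mono) auto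
        also have "\<dots> = \<Phi>\<^sup>2 * (real K * \<rho>)" by (simp add: algebra_simps)
        also have "\<dots> \<le> \<Phi>\<^sup>2 * (2 * real m)" using mk by (intro mult_left_mono) auto
        finally show ?thesis unfolding TTw by (simp add: algebra_simps)
      qed
    qed
    have B2: "\<delta> * real T \<le> 2 * (u * \<Phi>)"
    proof -
      have d2m: "\<delta>\<^sup>2 * real m = 2 * u\<^sup>2" using dsq m0 by simp
      have "(\<delta> * real T)\<^sup>2 * real m = (\<delta>\<^sup>2 * real m) * (real T * real T)"
        by (simp add: power2_eq_square algebra_simps)
      also have "\<dots> = 2 * u\<^sup>2 * (real T * real T)" unfolding d2m ..
      also have "\<dots> \<le> 2 * u\<^sup>2 * (2 * \<Phi>\<^sup>2 * real m)" using TT by (intro mult_left_mono) auto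
      also have "\<dots> = (2 * (u * \<Phi>))\<^sup>2 * real m" by (simp add: power2_eq_square algebra_simps)
      finally have c1: "(\<delta> * real T)\<^sup>2 * real m \<le> (2 * (u * \<Phi>))\<^sup>2 * real m" .
      have sq2: "(\<delta> * real T)\<^sup>2 \<le> (2 * (u * \<Phi>))\<^sup>2" by (rule mult_right_le_imp_le[OF c1 m0])
      have nn: "0 \<le> 2 * (u * \<Phi>)" using u0 Phi0 by simp
      show ?thesis by (rule power2_le_imp_le[OF sq2 nn])
    qed
    have B3: "4 * real K / (g0 + \<delta>) \<le> 18/5 * (u * \<Phi>)"
    proof -
      have "4 * real K / (g0 + \<delta>) \<le> 4 * real K / \<delta>" using g00 d0 Kpos by (intro divide_left_mono) auto
      also have "4 * real K / \<delta> \<le> 18/5 * (u * \<Phi>)"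
      proof -
        have K3: "real K ^ 3 \<le> (7/6 * (w * u)) ^ 3" using Ku' Kpos by (intro power_mono) auto
        have w3: "(7/6 * (w * u)) ^ 3 = 343/216 * ((real T * w) * u ^ 3)" using ww by (simp add: power3_eq_cube algebra_simps)
        have "real K ^ 2 * real m \<le> real K ^ 2 * real K" using mK by (intro mult_left_mono) auto
        also have "\<dots> = real K ^ 3" by (simp add: power3_eq_cube power2_eq_square)
        also have "\<dots> \<le> 343/216 * ((real T * w) * u ^ 3)" using K3 w3 by simp
        also have "\<dots> \<le> 343/216 * (\<Phi>\<^sup>2 * u ^ 3)" using T32 u0 by (intro mult_left_mono mult_right_mono) auto
        also have "\<dots> \<le> 343/216 * (\<Phi>\<^sup>2 * u ^ 4)"
        proof -
          have "u ^ 3 * 1 \<le> u ^ 3 * u" using u1 u0 by (intro mult_left_mono) auto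
          then have "u ^ 3 \<le> u ^ 4" by (simp add: power3_eq_cube power4_eq_xxxx)
          then show ?thesis by (intro mult_left_mono) auto
        qed
        finally have km: "real K ^ 2 * real m \<le> 343/216 * (\<Phi>\<^sup>2 * u ^ 4)" .
        have "(4 * real K)\<^sup>2 = 16 * (real K ^ 2 * real m) / real m" using m0 by (simp add: power2_eq_square)
        also have "\<dots> \<le> 16 * (343/216 * (\<Phi>\<^sup>2 * u ^ 4)) / real m"
        proof (rule divide_right_mono)
          show "16 * (real K ^ 2 * real m) \<le> 16 * (343/216 * (\<Phi>\<^sup>2 * u ^ 4))" using km by linarith
        qed (use m0 in simp)
        also have "\<dots> \<le> (18/5 * (u * \<Phi>) * \<delta>)\<^sup>2"
        proof -
          have "(18/5 * (u * \<Phi>) * \<delta>)\<^sup>2 = 324/25 * u\<^sup>2 * \<Phi>\<^sup>2 * \<delta>\<^sup>2"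
            by (simp add: power_mult_distrib power_divide)
          also have "\<dots> = 324/25 * u\<^sup>2 * \<Phi>\<^sup>2 * (2 * u\<^sup>2 / real m)" unfolding dsq ..
          also have "\<dots> = 648/25 * (\<Phi>\<^sup>2 * u ^ 4) / real m" by (simp add: power2_eq_square power4_eq_xxxx)
          finally have eq: "(18/5 * (u * \<Phi>) * \<delta>)\<^sup>2 = 648/25 * (\<Phi>\<^sup>2 * u ^ 4) / real m" .
          have "16 * (343/216 * (\<Phi>\<^sup>2 * u ^ 4)) \<le> 648/25 * (\<Phi>\<^sup>2 * u ^ 4)"
            by (simp add: mult_right_mono)
          then show ?thesis unfolding eq using m0 by (intro divide_right_mono) auto
        qed
        finally have sq3: "(4 * real K)\<^sup>2 \<le> (18/5 * (u * \<Phi>) * \<delta>)\<^sup>2" .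
        have nn3: "0 \<le> 18/5 * (u * \<Phi>) * \<delta>" using u0 Phi0 d0 by simp
        have "4 * real K \<le> 18/5 * (u * \<Phi>) * \<delta>" by (rule power2_le_imp_le[OF sq3 nn3])
        then show ?thesis using d0 by (simp add: divide_le_eq)
      qed
      finally show ?thesis .
    qed
    have B4: "real K \<le> 7/6 * (u * \<Phi>)"
    proof -
      have "w * u \<le> \<Phi> * u" using wPhi u0 by (intro mult_right_mono) auto
      then show ?thesis using Ku' by (simp add: mult.commute)
    qed
    have B5: "\<Phi> \<le> u * \<Phi>"
    proof -
      have "1 * \<Phi> \<le> u * \<Phi>" using u1 Phi0 by (intro mult_right_mono) auto
      then show ?thesis by simp
    qed
    have "R \<le> 15 * (u * \<Phi>) + 1" using R1 B1 B2 B3 B4 B5 by linarith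
    then show ?thesis unfolding G .
  qed
qed

theorem corollary6:
  fixes M :: "'a measure" and \<eta> :: "nat \<Rightarrow> 'a \<Rightarrow> real"
    and f :: "real \<Rightarrow> real" and xs L \<alpha> :: real and T :: nat
    and tb :: "nat \<Rightarrow> nat set \<Rightarrow> nat"
  assumes "prob_space M"
    and "\<And>t. \<eta> t \<in> borel_measurable M"
    and "prob_space.indep_vars M (\<lambda>_. borel) \<eta> UNIV"
    and "\<And>t. distr M borel (\<eta> t) = distr M borel (\<eta> 0)"
    and "\<And>t. subgaussian M 1 (\<eta> t)"
    and "\<And>x. x \<in> {0..1} \<Longrightarrow> f x \<in> {0..1}"
    and "xs \<in> {0..1}" and "\<And>x. x \<in> {0..1} \<Longrightarrow> f x \<le> f xs"
    and "L > 0" and "\<alpha> > 0"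
    and "\<And>x. x \<in> {0..1} \<Longrightarrow> f xs - f x \<le> L * \<bar>xs - x\<bar> powr \<alpha>"
    and "\<And>t S. S \<noteq> {} \<Longrightarrow> S \<subseteq> {1..disc_K T} \<Longrightarrow> tb t S \<in> S"
    and "T \<ge> 2"
    and "L \<le> 3 powr (1/4) * (4/3) powr ((2*\<alpha>+1)/4) * real T powr (2*\<alpha>)
              * ln (real T) powr ((\<alpha>+1)/2)"
  shows "greedy_regret M f xs (disc_K T) tb \<eta> T
     \<le> 15 * max (L powr (1/(2*\<alpha>+1))) (L powr (-1/(2*\<alpha>+1)))
          * real T powr ((3*\<alpha>+2)/(4*\<alpha>+2)) * sqrt (ln (real T)) + 1"
proof -
  define K where "K = disc_K T"
  note T2 = assms(13)
  have K1: "1 \<le> K" unfolding K_def by (rule disc_K_bounds(3)[OF T2])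
  have Kpos: "real K > 0" using K1 by simp
  have tbv: "\<And>t S. S \<noteq> {} \<Longrightarrow> S \<subseteq> {1..K} \<Longrightarrow> tb t S \<in> S" unfolding K_def by (rule assms(12))
  have H1: "greedy_regret M f xs K tb \<eta> T \<le> real T"
    by (rule regret_le_T[where M=M and \<eta>=\<eta> and f=f and xs=xs and K=K and tb=tb and T=T, OF assms(1) assms(2) assms(6) assms(8) assms(7) K1 tbv])
  have H2: "greedy_regret M f xs K tb \<eta> T \<le> real K + real T * exp (- (\<delta>\<^sup>2 * real m / 2)) + 2 * (g0 + \<delta>) * real T + 4 * real K / (g0 + \<delta>)"
    if m1: "1 \<le> m" and mK: "m \<le> K" and d: "\<delta> > 0" and gc: "L * (real m / real K) powr \<alpha> \<le> g0" for m \<delta> g0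
  proof -
    define A where "A = {i\<in>{1..K}. \<bar>real i - real K * xs\<bar> \<le> real m}"
    have AK: "A \<subseteq> {1..K}" unfolding A_def by auto
    have cA: "m \<le> card A" unfolding A_def
      using assms(7) Kpos by (intro arms_near[OF m1 mK]) (auto simp: mult_le_cancel_left1)
    have "0 \<le> L * (real m / real K) powr \<alpha>" using assms(9) by simp
    then have g0: "g0 \<ge> 0" using gc by linarith
    have gA: "f xs - f (real j / real K) \<le> g0" if jA: "j \<in> A" for j
    proof -
      have j: "1 \<le> j" "j \<le> K" "\<bar>real j - real K * xs\<bar> \<le> real m" using jA unfolding A_def by auto
      have jx: "real j / real K \<in> {0..1}" using j Kpos by auto
      have "\<bar>xs - real j / real K\<bar> = \<bar>real j - real K * xs\<bar> / real K"
        using Kpos by (simp add: field_simps abs_minus_commute abs_divide)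
      also have "\<dots> \<le> real m / real K" using j(3) Kpos by (intro divide_right_mono) auto
      finally have dd: "\<bar>xs - real j / real K\<bar> \<le> real m / real K" .
      have "\<bar>xs - real j / real K\<bar> powr \<alpha> \<le> (real m / real K) powr \<alpha>"
        using dd assms(10) by (intro powr_mono2) auto
      then have "L * \<bar>xs - real j / real K\<bar> powr \<alpha> \<le> L * (real m / real K) powr \<alpha>"
        using assms(9) by (intro mult_left_mono) auto
      then show ?thesis using assms(11)[OF jx] gc by linarith
    qed
    show ?thesis
      by (rule regret_bound[where M=M and \<eta>=\<eta> and f=f and xs=xs and K=K and tb=tb and T=T and A=A and m=m and \<delta>=\<delta>, OF assms(1) assms(2) assms(3) assms(5) assms(6) assms(8) assms(7) K1 tbv AK cA d g0 gA])
  qed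
  have "greedy_regret M f xs K tb \<eta> T \<le> 15 * max (L powr (1/(2*\<alpha>+1))) (L powr (-1/(2*\<alpha>+1))) * real T powr ((3*\<alpha>+2)/(4*\<alpha>+2)) * sqrt (ln (real T)) + 1"
    by (rule analytic[where R="greedy_regret M f xs K tb \<eta> T" and L=L and \<alpha>=\<alpha> and T=T and K=K, OF T2 assms(9) assms(10) _ _ H1 H2]) (use disc_K_bounds[OF T2] in \<open>simp_all add: K_def\<close>)
  then show ?thesis unfolding K_def .
qed


end
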